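(* If $\mathcal{D}$ is a fibrant double category, then the functor $\mathcal{D}_1^{\bullet}\to\mathcal{D}_0$, sending a horizontal endo-1-cell $M\colon A\nrightarrow A$ to $A$ and a morphism of $\mathcal{D}_1^{\bullet}$ to its vertical source (equal to its target), is a bifibration (both a fibration and an opfibration).
   Context: A (pseudo) double category $\mathcal{D}$ has a category $\mathcal{D}_0$ of objects and vertical 1-cells, a category $\mathcal{D}_1$ of horizontal 1-cells $M\colon A\nrightarrow B$ and 2-morphisms (squares with vertical source $f$ and target $g$), source/target functors, units $1_A$, and a horizontal composition $\odot$ associative and unital up to coherent globular isomorphisms. $\mathcal{D}_1^{\bullet}$ is the (non-full) subcategory of $\mathcal{D}_1$ whose objects are horizontal endo-1-cells $M\colon A\nrightarrow A$ and whose morphisms are 2-morphisms with equal vertical source and target $f\colon A\to B$. $\mathcal{D}$ is fibrant if every vertical 1-cell $f\colon A\to B$ has a companion $\hat f\colon A\nrightarrow B$, i.e. 2-morphisms $p_1\colon\hat f\Rightarrow1_B$ (vertical source $f$, target $\mathrm{id}_B$) and $p_2\colon1_A\Rightarrow\hat f$ (source $\mathrm{id}_A$, target $f$) with $p_1p_2=1_f$ and $p_1\odot p_2\cong1_{\hat f}$, and a conjoint $\check f\colon B\nrightarrow A$, i.e. $q_1\colon\check f\Rightarrow1_B$ (source $\mathrm{id}_B$, target $f$) and $q_2\colon1_A\Rightarrow\check f$ (source $f$, target $\mathrm{id}_A$) with $q_1q_2=1_f$ and $q_2\odot q_1\cong1_{\check f}$. *)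

theory Defs
  imports Main
begin

record ('o, 'a) cat_data =
  cOb   :: "'o set"
  cAr   :: "'a set"
  cdom  :: "'a \<Rightarrow> 'o"
  ccod  :: "'a \<Rightarrow> 'o"
  ccomp :: "'a \<Rightarrow> 'a \<Rightarrow> 'a"   (* ccomp C g f = g \<circ> f *)
  cid   :: "'o \<Rightarrow> 'a"

definition category :: "('o, 'a) cat_data \<Rightarrow> bool" where
  "category C \<longleftrightarrow>
     (\<forall>f\<in>cAr C. cdom C f \<in> cOb C \<and> ccod C f \<in> cOb C)
   \<and> (\<forall>a\<in>cOb C. cid C a \<in> cAr C \<and> cdom C (cid C a) = a \<and> ccod C (cid C a) = a)
   \<and> (\<forall>f\<in>cAr C. \<forall>g\<in>cAr C. ccod C f = cdom C g \<longrightarrow>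
        ccomp C g f \<in> cAr C \<and> cdom C (ccomp C g f) = cdom C f \<and> ccod C (ccomp C g f) = ccod C g)
   \<and> (\<forall>f\<in>cAr C. ccomp C f (cid C (cdom C f)) = f \<and> ccomp C (cid C (ccod C f)) f = f)
   \<and> (\<forall>f\<in>cAr C. \<forall>g\<in>cAr C. \<forall>h\<in>cAr C. ccod C f = cdom C g \<and> ccod C g = cdom C h \<longrightarrow>
        ccomp C h (ccomp C g f) = ccomp C (ccomp C h g) f)"

definition iso :: "('o, 'a) cat_data \<Rightarrow> 'a \<Rightarrow> bool" where
  "iso C f \<longleftrightarrow> f \<in> cAr C \<and>
     (\<exists>g\<in>cAr C. cdom C g = ccod C f \<and> ccod C g = cdom C f \<and>
        ccomp C g f = cid C (cdom C f) \<and> ccomp C f g = cid C (ccod C f))"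

definition "functor" :: "('o, 'a) cat_data \<Rightarrow> ('p, 'b) cat_data \<Rightarrow> ('o \<Rightarrow> 'p) \<Rightarrow> ('a \<Rightarrow> 'b) \<Rightarrow> bool" where
  "functor C D Fo Fa \<longleftrightarrow>
     (\<forall>a\<in>cOb C. Fo a \<in> cOb D)
   \<and> (\<forall>f\<in>cAr C. Fa f \<in> cAr D \<and> cdom D (Fa f) = Fo (cdom C f) \<and> ccod D (Fa f) = Fo (ccod C f))
   \<and> (\<forall>a\<in>cOb C. Fa (cid C a) = cid D (Fo a))
   \<and> (\<forall>f\<in>cAr C. \<forall>g\<in>cAr C. ccod C f = cdom C g \<longrightarrow> Fa (ccomp C g f) = ccomp D (Fa g) (Fa f))"

definition cartesian :: "('o, 'a) cat_data \<Rightarrow> ('p, 'b) cat_data \<Rightarrow> ('a \<Rightarrow> 'b) \<Rightarrow> 'a \<Rightarrow> bool" where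
  "cartesian C D Fa \<phi> \<longleftrightarrow> \<phi> \<in> cAr C \<and>
     (\<forall>\<psi>\<in>cAr C. ccod C \<psi> = ccod C \<phi> \<longrightarrow>
       (\<forall>g\<in>cAr D. ccod D g = cdom D (Fa \<phi>) \<and> Fa \<psi> = ccomp D (Fa \<phi>) g \<longrightarrow>
         (\<exists>!\<chi>. \<chi> \<in> cAr C \<and> cdom C \<chi> = cdom C \<psi> \<and> ccod C \<chi> = cdom C \<phi> \<and>
                Fa \<chi> = g \<and> ccomp C \<phi> \<chi> = \<psi>)))"

definition opcartesian :: "('o, 'a) cat_data \<Rightarrow> ('p, 'b) cat_data \<Rightarrow> ('a \<Rightarrow> 'b) \<Rightarrow> 'a \<Rightarrow> bool" where
  "opcartesian C D Fa \<phi> \<longleftrightarrow> \<phi> \<in> cAr C \<and>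
     (\<forall>\<psi>\<in>cAr C. cdom C \<psi> = cdom C \<phi> \<longrightarrow>
       (\<forall>h\<in>cAr D. cdom D h = ccod D (Fa \<phi>) \<and> Fa \<psi> = ccomp D h (Fa \<phi>) \<longrightarrow>
         (\<exists>!\<chi>. \<chi> \<in> cAr C \<and> cdom C \<chi> = ccod C \<phi> \<and> ccod C \<chi> = ccod C \<psi> \<and>
                Fa \<chi> = h \<and> ccomp C \<chi> \<phi> = \<psi>)))"

definition fibration :: "('o, 'a) cat_data \<Rightarrow> ('p, 'b) cat_data \<Rightarrow> ('o \<Rightarrow> 'p) \<Rightarrow> ('a \<Rightarrow> 'b) \<Rightarrow> bool" where
  "fibration C D Fo Fa \<longleftrightarrow> functor C D Fo Fa \<and>
     (\<forall>b\<in>cOb C. \<forall>f\<in>cAr D. ccod D f = Fo b \<longrightarrow>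
        (\<exists>\<phi>. cartesian C D Fa \<phi> \<and> ccod C \<phi> = b \<and> Fa \<phi> = f))"

definition opfibration :: "('o, 'a) cat_data \<Rightarrow> ('p, 'b) cat_data \<Rightarrow> ('o \<Rightarrow> 'p) \<Rightarrow> ('a \<Rightarrow> 'b) \<Rightarrow> bool" where
  "opfibration C D Fo Fa \<longleftrightarrow> functor C D Fo Fa \<and>
     (\<forall>a\<in>cOb C. \<forall>f\<in>cAr D. cdom D f = Fo a \<longrightarrow>
        (\<exists>\<phi>. opcartesian C D Fa \<phi> \<and> cdom C \<phi> = a \<and> Fa \<phi> = f))"

definition bifibration :: "('o, 'a) cat_data \<Rightarrow> ('p, 'b) cat_data \<Rightarrow> ('o \<Rightarrow> 'p) \<Rightarrow> ('a \<Rightarrow> 'b) \<Rightarrow> bool" where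
  "bifibration C D Fo Fa \<longleftrightarrow> fibration C D Fo Fa \<and> opfibration C D Fo Fa"

text \<open>'o objects, 'v vertical 1-cells, 'h horizontal 1-cells, 's 2-morphisms (squares).
  D1 has horizontal 1-cells as objects and squares as morphisms (composed vertically).
  A square \<alpha> : M \<Rightarrow> N has horizontal source M (cdom D1), target N (ccod D1),
  vertical source dc_vsrc \<alpha> (left edge) and vertical target dc_vtgt \<alpha> (right edge).
  Horizontal composition is written in composition order: dc_hcomp N M = N \<odot> M
  for M : A \<nrightarrow> B, N : B \<nrightarrow> C.\<close>

record ('o, 'v, 'h, 's) dbl_data =
  dc_D0      :: "('o, 'v) cat_data"
  dc_D1      :: "('h, 's) cat_data"
  dc_hsrc    :: "'h \<Rightarrow> 'o"
  dc_htgt    :: "'h \<Rightarrow> 'o"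
  dc_vsrc    :: "'s \<Rightarrow> 'v"
  dc_vtgt    :: "'s \<Rightarrow> 'v"
  dc_unit    :: "'o \<Rightarrow> 'h"
  dc_unitsq  :: "'v \<Rightarrow> 's"
  dc_hcomp   :: "'h \<Rightarrow> 'h \<Rightarrow> 'h"
  dc_hcompsq :: "'s \<Rightarrow> 's \<Rightarrow> 's"
  dc_assoc   :: "'h \<Rightarrow> 'h \<Rightarrow> 'h \<Rightarrow> 's"   (* dc_assoc P N M : (P\<odot>N)\<odot>M \<Rightarrow> P\<odot>(N\<odot>M) *)
  dc_lunit   :: "'h \<Rightarrow> 's"                 (* 1_B \<odot> M \<Rightarrow> M *)
  dc_runit   :: "'h \<Rightarrow> 's"                 (* M \<odot> 1_A \<Rightarrow> M *)

definition globular_iso :: "('o, 'v, 'h, 's) dbl_data \<Rightarrow> 's \<Rightarrow> 'h \<Rightarrow> 'h \<Rightarrow> bool" where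
  "globular_iso D \<alpha> M N \<longleftrightarrow>
     iso (dc_D1 D) \<alpha> \<and> cdom (dc_D1 D) \<alpha> = M \<and> ccod (dc_D1 D) \<alpha> = N \<and>
     dc_vsrc D \<alpha> = cid (dc_D0 D) (dc_hsrc D M) \<and> dc_vtgt D \<alpha> = cid (dc_D0 D) (dc_htgt D M)"

definition pseudo_double_category :: "('o, 'v, 'h, 's) dbl_data \<Rightarrow> bool" where
  "pseudo_double_category D \<longleftrightarrow>
   (let D0 = dc_D0 D; D1 = dc_D1 D; S = dc_hsrc D; T = dc_htgt D;
        Sv = dc_vsrc D; Tv = dc_vtgt D; U = dc_unit D; Usq = dc_unitsq D;
        hc = dc_hcomp D; hcs = dc_hcompsq D; a = dc_assoc D; l = dc_lunit D; r = dc_runit D;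
        c1 = ccomp D1; i1 = cid D1 in
     category D0 \<and> category D1
   \<and> functor D1 D0 S Sv \<and> functor D1 D0 T Tv \<and> functor D0 D1 U Usq
   \<and> (\<forall>A\<in>cOb D0. S (U A) = A \<and> T (U A) = A)
   \<and> (\<forall>f\<in>cAr D0. Sv (Usq f) = f \<and> Tv (Usq f) = f)
   \<and> (\<forall>M\<in>cOb D1. \<forall>N\<in>cOb D1. T M = S N \<longrightarrow>
        hc N M \<in> cOb D1 \<and> S (hc N M) = S M \<and> T (hc N M) = T N)
   \<and> (\<forall>\<alpha>\<in>cAr D1. \<forall>\<beta>\<in>cAr D1. Tv \<alpha> = Sv \<beta> \<longrightarrow>
        hcs \<beta> \<alpha> \<in> cAr D1 \<and> cdom D1 (hcs \<beta> \<alpha>) = hc (cdom D1 \<beta>) (cdom D1 \<alpha>)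
        \<and> ccod D1 (hcs \<beta> \<alpha>) = hc (ccod D1 \<beta>) (ccod D1 \<alpha>)
        \<and> Sv (hcs \<beta> \<alpha>) = Sv \<alpha> \<and> Tv (hcs \<beta> \<alpha>) = Tv \<beta>)
   \<and> (\<forall>M\<in>cOb D1. \<forall>N\<in>cOb D1. T M = S N \<longrightarrow> hcs (i1 N) (i1 M) = i1 (hc N M))
   \<and> (\<forall>\<alpha>\<in>cAr D1. \<forall>\<alpha>'\<in>cAr D1. \<forall>\<beta>\<in>cAr D1. \<forall>\<beta>'\<in>cAr D1.
        ccod D1 \<alpha> = cdom D1 \<alpha>' \<and> ccod D1 \<beta> = cdom D1 \<beta>' \<and> Tv \<alpha> = Sv \<beta> \<and> Tv \<alpha>' = Sv \<beta>' \<longrightarrow>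
        hcs (c1 \<beta>' \<beta>) (c1 \<alpha>' \<alpha>) = c1 (hcs \<beta>' \<alpha>') (hcs \<beta> \<alpha>))
   \<comment> \<open>associator: globular, invertible, natural\<close>
   \<and> (\<forall>M\<in>cOb D1. \<forall>N\<in>cOb D1. \<forall>P\<in>cOb D1. T M = S N \<and> T N = S P \<longrightarrow>
        globular_iso D (a P N M) (hc (hc P N) M) (hc P (hc N M)))
   \<and> (\<forall>\<alpha>\<in>cAr D1. \<forall>\<beta>\<in>cAr D1. \<forall>\<gamma>\<in>cAr D1. Tv \<alpha> = Sv \<beta> \<and> Tv \<beta> = Sv \<gamma> \<longrightarrow>
        c1 (a (ccod D1 \<gamma>) (ccod D1 \<beta>) (ccod D1 \<alpha>)) (hcs (hcs \<gamma> \<beta>) \<alpha>)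
        = c1 (hcs \<gamma> (hcs \<beta> \<alpha>)) (a (cdom D1 \<gamma>) (cdom D1 \<beta>) (cdom D1 \<alpha>)))
   \<comment> \<open>unitors: globular, invertible, natural\<close>
   \<and> (\<forall>M\<in>cOb D1. globular_iso D (l M) (hc (U (T M)) M) M \<and> globular_iso D (r M) (hc M (U (S M))) M)
   \<and> (\<forall>\<alpha>\<in>cAr D1. c1 (l (ccod D1 \<alpha>)) (hcs (Usq (Tv \<alpha>)) \<alpha>) = c1 \<alpha> (l (cdom D1 \<alpha>)))
   \<and> (\<forall>\<alpha>\<in>cAr D1. c1 (r (ccod D1 \<alpha>)) (hcs \<alpha> (Usq (Sv \<alpha>))) = c1 \<alpha> (r (cdom D1 \<alpha>)))
   \<comment> \<open>pentagon\<close>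
   \<and> (\<forall>M\<in>cOb D1. \<forall>N\<in>cOb D1. \<forall>P\<in>cOb D1. \<forall>Q\<in>cOb D1. T M = S N \<and> T N = S P \<and> T P = S Q \<longrightarrow>
        c1 (a Q P (hc N M)) (a (hc Q P) N M)
        = c1 (hcs (i1 Q) (a P N M)) (c1 (a Q (hc P N) M) (hcs (a Q P N) (i1 M))))
   \<comment> \<open>triangle\<close>
   \<and> (\<forall>M\<in>cOb D1. \<forall>N\<in>cOb D1. T M = S N \<longrightarrow>
        c1 (hcs (i1 N) (l M)) (a N (U (T M)) M) = hcs (r N) (i1 M)))"

text \<open>The condition p1 \<odot> p2 \<cong> 1 is expressed via the unitors:
  p1 \<odot> p2 : fh \<odot> 1_A \<Rightarrow> 1_B \<odot> fh equals \<lambda>^{-1} \<circ> \<rho>, i.e. \<lambda> \<circ> (p1 \<odot> p2) = \<rho>.\<close>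

definition has_companion :: "('o, 'v, 'h, 's) dbl_data \<Rightarrow> 'v \<Rightarrow> bool" where
  "has_companion D f \<longleftrightarrow>
   (let D0 = dc_D0 D; D1 = dc_D1 D; A = cdom D0 f; B = ccod D0 f in
    \<exists>fh p1 p2. fh \<in> cOb D1 \<and> dc_hsrc D fh = A \<and> dc_htgt D fh = B
      \<and> p1 \<in> cAr D1 \<and> cdom D1 p1 = fh \<and> ccod D1 p1 = dc_unit D B
      \<and> dc_vsrc D p1 = f \<and> dc_vtgt D p1 = cid D0 B
      \<and> p2 \<in> cAr D1 \<and> cdom D1 p2 = dc_unit D A \<and> ccod D1 p2 = fh
      \<and> dc_vsrc D p2 = cid D0 A \<and> dc_vtgt D p2 = f
      \<and> ccomp D1 p1 p2 = dc_unitsq D f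
      \<and> ccomp D1 (dc_lunit D fh) (dc_hcompsq D p1 p2) = dc_runit D fh)"

text \<open>q2 \<odot> q1 : 1_A \<odot> fc \<Rightarrow> fc \<odot> 1_B; the condition q2 \<odot> q1 \<cong> 1 reads \<rho> \<circ> (q2 \<odot> q1) = \<lambda>.\<close>

definition has_conjoint :: "('o, 'v, 'h, 's) dbl_data \<Rightarrow> 'v \<Rightarrow> bool" where
  "has_conjoint D f \<longleftrightarrow>
   (let D0 = dc_D0 D; D1 = dc_D1 D; A = cdom D0 f; B = ccod D0 f in
    \<exists>fc q1 q2. fc \<in> cOb D1 \<and> dc_hsrc D fc = B \<and> dc_htgt D fc = A
      \<and> q1 \<in> cAr D1 \<and> cdom D1 q1 = fc \<and> ccod D1 q1 = dc_unit D B
      \<and> dc_vsrc D q1 = cid D0 B \<and> dc_vtgt D q1 = f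
      \<and> q2 \<in> cAr D1 \<and> cdom D1 q2 = dc_unit D A \<and> ccod D1 q2 = fc
      \<and> dc_vsrc D q2 = f \<and> dc_vtgt D q2 = cid D0 A
      \<and> ccomp D1 q1 q2 = dc_unitsq D f
      \<and> ccomp D1 (dc_runit D fc) (dc_hcompsq D q2 q1) = dc_lunit D fc)"

definition fibrant :: "('o, 'v, 'h, 's) dbl_data \<Rightarrow> bool" where
  "fibrant D \<longleftrightarrow> pseudo_double_category D \<and>
     (\<forall>f\<in>cAr (dc_D0 D). has_companion D f \<and> has_conjoint D f)"

definition endo_cat :: "('o, 'v, 'h, 's) dbl_data \<Rightarrow> ('h, 's) cat_data" where
  "endo_cat D =
    \<lparr> cOb = {M \<in> cOb (dc_D1 D). dc_hsrc D M = dc_htgt D M},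
      cAr = {\<alpha> \<in> cAr (dc_D1 D). dc_vsrc D \<alpha> = dc_vtgt D \<alpha>
               \<and> dc_hsrc D (cdom (dc_D1 D) \<alpha>) = dc_htgt D (cdom (dc_D1 D) \<alpha>)
               \<and> dc_hsrc D (ccod (dc_D1 D) \<alpha>) = dc_htgt D (ccod (dc_D1 D) \<alpha>)},
      cdom = cdom (dc_D1 D), ccod = ccod (dc_D1 D),
      ccomp = ccomp (dc_D1 D), cid = cid (dc_D1 D) \<rparr>"

end

theory Submission
  imports Defs
begin


lemma catD:
  assumes "category C"
  shows cat_dom: "\<And>f. f \<in> cAr C \<Longrightarrow> cdom C f \<in> cOb C"
    and cat_cod: "\<And>f. f \<in> cAr C \<Longrightarrow> ccod C f \<in> cOb C"
    and cat_id: "\<And>a. a \<in> cOb C \<Longrightarrow> cid C a \<in> cAr C"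
    and cat_id_dom: "\<And>a. a \<in> cOb C \<Longrightarrow> cdom C (cid C a) = a"
    and cat_id_cod: "\<And>a. a \<in> cOb C \<Longrightarrow> ccod C (cid C a) = a"
    and cat_comp: "\<And>f g. f \<in> cAr C \<Longrightarrow> g \<in> cAr C \<Longrightarrow> ccod C f = cdom C g \<Longrightarrow> ccomp C g f \<in> cAr C"
    and cat_comp_dom: "\<And>f g. f \<in> cAr C \<Longrightarrow> g \<in> cAr C \<Longrightarrow> ccod C f = cdom C g \<Longrightarrow> cdom C (ccomp C g f) = cdom C f"
    and cat_comp_cod: "\<And>f g. f \<in> cAr C \<Longrightarrow> g \<in> cAr C \<Longrightarrow> ccod C f = cdom C g \<Longrightarrow> ccod C (ccomp C g f) = ccod C g"
    and cat_idr: "\<And>f a. f \<in> cAr C \<Longrightarrow> cdom C f = a \<Longrightarrow> ccomp C f (cid C a) = f"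
    and cat_idl: "\<And>f a. f \<in> cAr C \<Longrightarrow> ccod C f = a \<Longrightarrow> ccomp C (cid C a) f = f"
    and cat_assoc: "\<And>f g h. f \<in> cAr C \<Longrightarrow> g \<in> cAr C \<Longrightarrow> h \<in> cAr C \<Longrightarrow> ccod C f = cdom C g \<Longrightarrow> ccod C g = cdom C h \<Longrightarrow>
        ccomp C (ccomp C h g) f = ccomp C h (ccomp C g f)"
  using assms unfolding category_def by metis+

locale pdc =
  fixes D :: "('o,'v,'h,'s) dbl_data"
  assumes pdc: "pseudo_double_category D"
begin

abbreviation "D0 \<equiv> dc_D0 D"
abbreviation "D1 \<equiv> dc_D1 D"
abbreviation "Ob0 \<equiv> cOb D0"
abbreviation "Ar0 \<equiv> cAr D0"
abbreviation "d0 \<equiv> cdom D0"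
abbreviation "c0 \<equiv> ccod D0"
abbreviation "k0 \<equiv> ccomp D0"
abbreviation "e0 \<equiv> cid D0"
abbreviation "Ob1 \<equiv> cOb D1"
abbreviation "Ar1 \<equiv> cAr D1"
abbreviation "d1 \<equiv> cdom D1"
abbreviation "c1 \<equiv> ccod D1"
abbreviation "k1 \<equiv> ccomp D1"
abbreviation "e1 \<equiv> cid D1"
abbreviation "Sh \<equiv> dc_hsrc D"
abbreviation "Th \<equiv> dc_htgt D"
abbreviation "Sv \<equiv> dc_vsrc D"
abbreviation "Tv \<equiv> dc_vtgt D"
abbreviation "Uh \<equiv> dc_unit D"
abbreviation "Us \<equiv> dc_unitsq D"
abbreviation "hc \<equiv> dc_hcomp D"
abbreviation "hs \<equiv> dc_hcompsq D"
abbreviation "aa \<equiv> dc_assoc D"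
abbreviation "ll \<equiv> dc_lunit D"
abbreviation "rr \<equiv> dc_runit D"

lemmas P = pdc[unfolded pseudo_double_category_def Let_def]

lemma cat0: "category D0" using P by (elim conjE) assumption
lemma cat1: "category D1" using P by (elim conjE) assumption
lemma funS: "functor D1 D0 Sh Sv" using P by (elim conjE) assumption
lemma funT: "functor D1 D0 Th Tv" using P by (elim conjE) assumption
lemma funU: "functor D0 D1 Uh Us" using P by (elim conjE) assumption
lemma U_ST': "\<forall>A\<in>Ob0. Sh (Uh A) = A \<and> Th (Uh A) = A" using P by (elim conjE) assumption
lemma Us_ST': "\<forall>f\<in>Ar0. Sv (Us f) = f \<and> Tv (Us f) = f" using P by (elim conjE) assumption
lemma hc_ax': "\<forall>M\<in>Ob1. \<forall>N\<in>Ob1. Th M = Sh N \<longrightarrow>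
        hc N M \<in> Ob1 \<and> Sh (hc N M) = Sh M \<and> Th (hc N M) = Th N" using P by (elim conjE) assumption
lemma hs_ax': "\<forall>\<alpha>\<in>Ar1. \<forall>\<beta>\<in>Ar1. Tv \<alpha> = Sv \<beta> \<longrightarrow>
        hs \<beta> \<alpha> \<in> Ar1 \<and> d1 (hs \<beta> \<alpha>) = hc (d1 \<beta>) (d1 \<alpha>)
        \<and> c1 (hs \<beta> \<alpha>) = hc (c1 \<beta>) (c1 \<alpha>)
        \<and> Sv (hs \<beta> \<alpha>) = Sv \<alpha> \<and> Tv (hs \<beta> \<alpha>) = Tv \<beta>" using P by (elim conjE) assumption
lemma hs_id': "\<forall>M\<in>Ob1. \<forall>N\<in>Ob1. Th M = Sh N \<longrightarrow> hs (e1 N) (e1 M) = e1 (hc N M)" using P by (elim conjE) assumption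
lemma interchange': "\<forall>\<alpha>\<in>Ar1. \<forall>\<alpha>'\<in>Ar1. \<forall>\<beta>\<in>Ar1. \<forall>\<beta>'\<in>Ar1.
        c1 \<alpha> = d1 \<alpha>' \<and> c1 \<beta> = d1 \<beta>' \<and> Tv \<alpha> = Sv \<beta> \<and> Tv \<alpha>' = Sv \<beta>' \<longrightarrow>
        hs (k1 \<beta>' \<beta>) (k1 \<alpha>' \<alpha>) = k1 (hs \<beta>' \<alpha>') (hs \<beta> \<alpha>)" using P by (elim conjE) assumption
lemma a_glob': "\<forall>M\<in>Ob1. \<forall>N\<in>Ob1. \<forall>P\<in>Ob1. Th M = Sh N \<and> Th N = Sh P \<longrightarrow>
        globular_iso D (aa P N M) (hc (hc P N) M) (hc P (hc N M))" using P by (elim conjE) assumption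
lemma a_nat': "\<forall>\<alpha>\<in>Ar1. \<forall>\<beta>\<in>Ar1. \<forall>\<gamma>\<in>Ar1. Tv \<alpha> = Sv \<beta> \<and> Tv \<beta> = Sv \<gamma> \<longrightarrow>
        k1 (aa (c1 \<gamma>) (c1 \<beta>) (c1 \<alpha>)) (hs (hs \<gamma> \<beta>) \<alpha>)
        = k1 (hs \<gamma> (hs \<beta> \<alpha>)) (aa (d1 \<gamma>) (d1 \<beta>) (d1 \<alpha>))" using P by (elim conjE) assumption
lemma lr_glob': "\<forall>M\<in>Ob1. globular_iso D (ll M) (hc (Uh (Th M)) M) M \<and> globular_iso D (rr M) (hc M (Uh (Sh M))) M"
  using P by (elim conjE) assumption
lemma l_nat': "\<forall>\<alpha>\<in>Ar1. k1 (ll (c1 \<alpha>)) (hs (Us (Tv \<alpha>)) \<alpha>) = k1 \<alpha> (ll (d1 \<alpha>))" using P by (elim conjE) assumption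
lemma r_nat': "\<forall>\<alpha>\<in>Ar1. k1 (rr (c1 \<alpha>)) (hs \<alpha> (Us (Sv \<alpha>))) = k1 \<alpha> (rr (d1 \<alpha>))" using P by (elim conjE) assumption
lemma pentagon': "\<forall>M\<in>Ob1. \<forall>N\<in>Ob1. \<forall>P\<in>Ob1. \<forall>Q\<in>Ob1. Th M = Sh N \<and> Th N = Sh P \<and> Th P = Sh Q \<longrightarrow>
        k1 (aa Q P (hc N M)) (aa (hc Q P) N M)
        = k1 (hs (e1 Q) (aa P N M)) (k1 (aa Q (hc P N) M) (hs (aa Q P N) (e1 M)))" using P by (elim conjE) assumption
lemma triangle': "\<forall>M\<in>Ob1. \<forall>N\<in>Ob1. Th M = Sh N \<longrightarrow>
        k1 (hs (e1 N) (ll M)) (aa N (Uh (Th M)) M) = hs (rr N) (e1 M)" using P by (elim conjE) assumption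

lemmas U_ST = U_ST'[rule_format] and Us_ST = Us_ST'[rule_format] and hc_ax = hc_ax'[rule_format]
  and hs_ax = hs_ax'[rule_format] and hs_id = hs_id'[rule_format] and interchange = interchange'[rule_format, OF _ _ _ _ conjI[OF _ conjI[OF _ conjI]]]
  and a_glob = a_glob'[rule_format, OF _ _ _ conjI] and a_nat = a_nat'[rule_format, OF _ _ _ conjI]
  and lr_glob = lr_glob'[rule_format] and l_nat = l_nat'[rule_format] and r_nat = r_nat'[rule_format]
  and pentagon = pentagon'[rule_format, OF _ _ _ _ conjI[OF _ conjI]] and triangle = triangle'[rule_format]



lemma funD:
  assumes "functor C E Fo Fa"
  shows fun_ob: "\<And>a. a \<in> cOb C \<Longrightarrow> Fo a \<in> cOb E"
    and fun_ar: "\<And>f. f \<in> cAr C \<Longrightarrow> Fa f \<in> cAr E"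
    and fun_dom: "\<And>f. f \<in> cAr C \<Longrightarrow> cdom E (Fa f) = Fo (cdom C f)"
    and fun_cod: "\<And>f. f \<in> cAr C \<Longrightarrow> ccod E (Fa f) = Fo (ccod C f)"
    and fun_id: "\<And>a. a \<in> cOb C \<Longrightarrow> Fa (cid C a) = cid E (Fo a)"
    and fun_comp: "\<And>f g. f \<in> cAr C \<Longrightarrow> g \<in> cAr C \<Longrightarrow> ccod C f = cdom C g \<Longrightarrow> Fa (ccomp C g f) = ccomp E (Fa g) (Fa f)"
  using assms unfolding functor_def by blast+

lemmas c0simps[simp] = catD[OF cat0]
lemmas c1simps[simp] = catD[OF cat1]
lemmas fSsimps[simp] = funD[OF funS]
lemmas fTsimps[simp] = funD[OF funT]
lemmas fUsimps[simp] = funD[OF funU]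

lemma Uh_S[simp]: "A \<in> Ob0 \<Longrightarrow> Sh (Uh A) = A" and Uh_T[simp]: "A \<in> Ob0 \<Longrightarrow> Th (Uh A) = A"
  using U_ST by auto
lemma Us_S[simp]: "f \<in> Ar0 \<Longrightarrow> Sv (Us f) = f" and Us_T[simp]: "f \<in> Ar0 \<Longrightarrow> Tv (Us f) = f"
  using Us_ST by auto

lemma hc_ob[simp]: "M \<in> Ob1 \<Longrightarrow> N \<in> Ob1 \<Longrightarrow> Th M = Sh N \<Longrightarrow> hc N M \<in> Ob1"
  and hc_S[simp]: "M \<in> Ob1 \<Longrightarrow> N \<in> Ob1 \<Longrightarrow> Th M = Sh N \<Longrightarrow> Sh (hc N M) = Sh M"
  and hc_T[simp]: "M \<in> Ob1 \<Longrightarrow> N \<in> Ob1 \<Longrightarrow> Th M = Sh N \<Longrightarrow> Th (hc N M) = Th N"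
  using hc_ax by auto

lemma hs_ar[simp]: "\<alpha> \<in> Ar1 \<Longrightarrow> \<beta> \<in> Ar1 \<Longrightarrow> Tv \<alpha> = Sv \<beta> \<Longrightarrow> hs \<beta> \<alpha> \<in> Ar1"
  and hs_d[simp]: "\<alpha> \<in> Ar1 \<Longrightarrow> \<beta> \<in> Ar1 \<Longrightarrow> Tv \<alpha> = Sv \<beta> \<Longrightarrow> d1 (hs \<beta> \<alpha>) = hc (d1 \<beta>) (d1 \<alpha>)"
  and hs_c[simp]: "\<alpha> \<in> Ar1 \<Longrightarrow> \<beta> \<in> Ar1 \<Longrightarrow> Tv \<alpha> = Sv \<beta> \<Longrightarrow> c1 (hs \<beta> \<alpha>) = hc (c1 \<beta>) (c1 \<alpha>)"
  and hs_S[simp]: "\<alpha> \<in> Ar1 \<Longrightarrow> \<beta> \<in> Ar1 \<Longrightarrow> Tv \<alpha> = Sv \<beta> \<Longrightarrow> Sv (hs \<beta> \<alpha>) = Sv \<alpha>"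
  and hs_T[simp]: "\<alpha> \<in> Ar1 \<Longrightarrow> \<beta> \<in> Ar1 \<Longrightarrow> Tv \<alpha> = Sv \<beta> \<Longrightarrow> Tv (hs \<beta> \<alpha>) = Tv \<beta>"
  using hs_ax by auto

lemma hs_e1[simp]: "M \<in> Ob1 \<Longrightarrow> N \<in> Ob1 \<Longrightarrow> Th M = Sh N \<Longrightarrow> hs (e1 N) (e1 M) = e1 (hc N M)"
  by (rule hs_id)

lemma globD: "globular_iso D \<alpha> M N \<Longrightarrow> \<alpha> \<in> Ar1 \<and> d1 \<alpha> = M \<and> c1 \<alpha> = N \<and> Sv \<alpha> = e0 (Sh M) \<and> Tv \<alpha> = e0 (Th M)
   \<and> (\<exists>g\<in>Ar1. d1 g = N \<and> c1 g = M \<and> k1 g \<alpha> = e1 M \<and> k1 \<alpha> g = e1 N)"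
  unfolding globular_iso_def iso_def by auto

definition inv1 :: "'s \<Rightarrow> 's" where
  "inv1 \<alpha> = (SOME g. g \<in> Ar1 \<and> d1 g = c1 \<alpha> \<and> c1 g = d1 \<alpha> \<and> k1 g \<alpha> = e1 (d1 \<alpha>) \<and> k1 \<alpha> g = e1 (c1 \<alpha>))"

lemma glob_inv:
  assumes "globular_iso D \<alpha> M N" and "M \<in> Ob1" and "N \<in> Ob1" and "Sh N = Sh M" and "Th N = Th M"
  shows "inv1 \<alpha> \<in> Ar1 \<and> d1 (inv1 \<alpha>) = N \<and> c1 (inv1 \<alpha>) = M \<and> k1 (inv1 \<alpha>) \<alpha> = e1 M \<and> k1 \<alpha> (inv1 \<alpha>) = e1 N
     \<and> Sv (inv1 \<alpha>) = e0 (Sh M) \<and> Tv (inv1 \<alpha>) = e0 (Th M)"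
proof -
  from globD[OF assms(1)] obtain g where g: "g \<in> Ar1" "d1 g = N" "c1 g = M" "k1 g \<alpha> = e1 M" "k1 \<alpha> g = e1 N"
    and a: "\<alpha> \<in> Ar1" "d1 \<alpha> = M" "c1 \<alpha> = N" "Sv \<alpha> = e0 (Sh M)" "Tv \<alpha> = e0 (Th M)" by blast
  have "\<exists>g. g \<in> Ar1 \<and> d1 g = c1 \<alpha> \<and> c1 g = d1 \<alpha> \<and> k1 g \<alpha> = e1 (d1 \<alpha>) \<and> k1 \<alpha> g = e1 (c1 \<alpha>)"
    using g a by auto
  from someI_ex[OF this]
  have i: "inv1 \<alpha> \<in> Ar1 \<and> d1 (inv1 \<alpha>) = N \<and> c1 (inv1 \<alpha>) = M \<and> k1 (inv1 \<alpha>) \<alpha> = e1 M \<and> k1 \<alpha> (inv1 \<alpha>) = e1 N"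
    unfolding inv1_def[symmetric] using a by simp
  have "Sv (inv1 \<alpha>) = k0 (Sv \<alpha>) (Sv (inv1 \<alpha>))" using i a assms by simp
  also have "\<dots> = Sv (k1 \<alpha> (inv1 \<alpha>))" by (rule fun_comp[OF funS, symmetric]) (use i a in auto)
  also have "\<dots> = e0 (Sh M)" using i a assms by simp
  finally have sv: "Sv (inv1 \<alpha>) = e0 (Sh M)" .
  have "Tv (inv1 \<alpha>) = k0 (Tv \<alpha>) (Tv (inv1 \<alpha>))" using i a assms by simp
  also have "\<dots> = Tv (k1 \<alpha> (inv1 \<alpha>))" by (rule fun_comp[OF funT, symmetric]) (use i a in auto)
  also have "\<dots> = e0 (Th M)" using i a assms by simp
  finally have tv: "Tv (inv1 \<alpha>) = e0 (Th M)" .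
  show ?thesis using i sv tv by blast
qed

abbreviation "ai Q N M \<equiv> inv1 (aa Q N M)"
abbreviation "li M \<equiv> inv1 (ll M)"
abbreviation "ri M \<equiv> inv1 (rr M)"

context
  fixes M N Q
  assumes ob: "M \<in> Ob1" "N \<in> Ob1" "Q \<in> Ob1" "Th M = Sh N" "Th N = Sh Q"
begin
lemma a_facts: "aa Q N M \<in> Ar1 \<and> d1 (aa Q N M) = hc (hc Q N) M \<and> c1 (aa Q N M) = hc Q (hc N M)
   \<and> Sv (aa Q N M) = e0 (Sh M) \<and> Tv (aa Q N M) = e0 (Th Q)"
  using globD[OF a_glob[OF ob]] ob by simp
lemma ai_facts: "ai Q N M \<in> Ar1 \<and> d1 (ai Q N M) = hc Q (hc N M) \<and> c1 (ai Q N M) = hc (hc Q N) M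
   \<and> k1 (ai Q N M) (aa Q N M) = e1 (hc (hc Q N) M) \<and> k1 (aa Q N M) (ai Q N M) = e1 (hc Q (hc N M))
   \<and> Sv (ai Q N M) = e0 (Sh M) \<and> Tv (ai Q N M) = e0 (Th Q)"
  using glob_inv[OF a_glob[OF ob]] ob by simp
end

lemma l_facts: "M \<in> Ob1 \<Longrightarrow> ll M \<in> Ar1 \<and> d1 (ll M) = hc (Uh (Th M)) M \<and> c1 (ll M) = M
   \<and> Sv (ll M) = e0 (Sh M) \<and> Tv (ll M) = e0 (Th M)"
  using globD[OF conjunct1[OF lr_glob]] by simp
lemma r_facts: "M \<in> Ob1 \<Longrightarrow> rr M \<in> Ar1 \<and> d1 (rr M) = hc M (Uh (Sh M)) \<and> c1 (rr M) = M
   \<and> Sv (rr M) = e0 (Sh M) \<and> Tv (rr M) = e0 (Th M)"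
  using globD[OF conjunct2[OF lr_glob]] by simp
lemma li_facts: "M \<in> Ob1 \<Longrightarrow> li M \<in> Ar1 \<and> d1 (li M) = M \<and> c1 (li M) = hc (Uh (Th M)) M
   \<and> k1 (li M) (ll M) = e1 (hc (Uh (Th M)) M) \<and> k1 (ll M) (li M) = e1 M
   \<and> Sv (li M) = e0 (Sh M) \<and> Tv (li M) = e0 (Th M)"
  using glob_inv[OF conjunct1[OF lr_glob]] by simp
lemma ri_facts: "M \<in> Ob1 \<Longrightarrow> ri M \<in> Ar1 \<and> d1 (ri M) = M \<and> c1 (ri M) = hc M (Uh (Sh M))
   \<and> k1 (ri M) (rr M) = e1 (hc M (Uh (Sh M))) \<and> k1 (rr M) (ri M) = e1 M
   \<and> Sv (ri M) = e0 (Sh M) \<and> Tv (ri M) = e0 (Th M)"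
  using glob_inv[OF conjunct2[OF lr_glob]] by simp

lemma aa_ar[simp]: "M \<in> Ob1 \<Longrightarrow> N \<in> Ob1 \<Longrightarrow> Q \<in> Ob1 \<Longrightarrow> Th M = Sh N \<Longrightarrow> Th N = Sh Q \<Longrightarrow> aa Q N M \<in> Ar1" using a_facts by blast
lemma aa_d[simp]: "M \<in> Ob1 \<Longrightarrow> N \<in> Ob1 \<Longrightarrow> Q \<in> Ob1 \<Longrightarrow> Th M = Sh N \<Longrightarrow> Th N = Sh Q \<Longrightarrow> d1 (aa Q N M) = hc (hc Q N) M" using a_facts by blast
lemma aa_c[simp]: "M \<in> Ob1 \<Longrightarrow> N \<in> Ob1 \<Longrightarrow> Q \<in> Ob1 \<Longrightarrow> Th M = Sh N \<Longrightarrow> Th N = Sh Q \<Longrightarrow> c1 (aa Q N M) = hc Q (hc N M)" using a_facts by blast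
lemma aa_S[simp]: "M \<in> Ob1 \<Longrightarrow> N \<in> Ob1 \<Longrightarrow> Q \<in> Ob1 \<Longrightarrow> Th M = Sh N \<Longrightarrow> Th N = Sh Q \<Longrightarrow> Sv (aa Q N M) = e0 (Sh M)" using a_facts by blast
lemma aa_T[simp]: "M \<in> Ob1 \<Longrightarrow> N \<in> Ob1 \<Longrightarrow> Q \<in> Ob1 \<Longrightarrow> Th M = Sh N \<Longrightarrow> Th N = Sh Q \<Longrightarrow> Tv (aa Q N M) = e0 (Th Q)" using a_facts by blast
lemma ai_ar[simp]: "M \<in> Ob1 \<Longrightarrow> N \<in> Ob1 \<Longrightarrow> Q \<in> Ob1 \<Longrightarrow> Th M = Sh N \<Longrightarrow> Th N = Sh Q \<Longrightarrow> ai Q N M \<in> Ar1" using ai_facts by blast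
lemma ai_d[simp]: "M \<in> Ob1 \<Longrightarrow> N \<in> Ob1 \<Longrightarrow> Q \<in> Ob1 \<Longrightarrow> Th M = Sh N \<Longrightarrow> Th N = Sh Q \<Longrightarrow> d1 (ai Q N M) = hc Q (hc N M)" using ai_facts by blast
lemma ai_c[simp]: "M \<in> Ob1 \<Longrightarrow> N \<in> Ob1 \<Longrightarrow> Q \<in> Ob1 \<Longrightarrow> Th M = Sh N \<Longrightarrow> Th N = Sh Q \<Longrightarrow> c1 (ai Q N M) = hc (hc Q N) M" using ai_facts by blast
lemma ai_S[simp]: "M \<in> Ob1 \<Longrightarrow> N \<in> Ob1 \<Longrightarrow> Q \<in> Ob1 \<Longrightarrow> Th M = Sh N \<Longrightarrow> Th N = Sh Q \<Longrightarrow> Sv (ai Q N M) = e0 (Sh M)" using ai_facts by blast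
lemma ai_T[simp]: "M \<in> Ob1 \<Longrightarrow> N \<in> Ob1 \<Longrightarrow> Q \<in> Ob1 \<Longrightarrow> Th M = Sh N \<Longrightarrow> Th N = Sh Q \<Longrightarrow> Tv (ai Q N M) = e0 (Th Q)" using ai_facts by blast
lemma ai_aa[simp]: "M \<in> Ob1 \<Longrightarrow> N \<in> Ob1 \<Longrightarrow> Q \<in> Ob1 \<Longrightarrow> Th M = Sh N \<Longrightarrow> Th N = Sh Q \<Longrightarrow> k1 (ai Q N M) (aa Q N M) = e1 (hc (hc Q N) M)" using ai_facts by blast
lemma aa_ai[simp]: "M \<in> Ob1 \<Longrightarrow> N \<in> Ob1 \<Longrightarrow> Q \<in> Ob1 \<Longrightarrow> Th M = Sh N \<Longrightarrow> Th N = Sh Q \<Longrightarrow> k1 (aa Q N M) (ai Q N M) = e1 (hc Q (hc N M))" using ai_facts by blast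
lemma ll_ar[simp]: "M \<in> Ob1 \<Longrightarrow> ll M \<in> Ar1" using l_facts by blast
lemma ll_d[simp]: "M \<in> Ob1 \<Longrightarrow> d1 (ll M) = hc (Uh (Th M)) M" using l_facts by blast
lemma ll_c[simp]: "M \<in> Ob1 \<Longrightarrow> c1 (ll M) = M" using l_facts by blast
lemma ll_S[simp]: "M \<in> Ob1 \<Longrightarrow> Sv (ll M) = e0 (Sh M)" using l_facts by blast
lemma ll_T[simp]: "M \<in> Ob1 \<Longrightarrow> Tv (ll M) = e0 (Th M)" using l_facts by blast
lemma rr_ar[simp]: "M \<in> Ob1 \<Longrightarrow> rr M \<in> Ar1" using r_facts by blast
lemma rr_d[simp]: "M \<in> Ob1 \<Longrightarrow> d1 (rr M) = hc M (Uh (Sh M))" using r_facts by blast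
lemma rr_c[simp]: "M \<in> Ob1 \<Longrightarrow> c1 (rr M) = M" using r_facts by blast
lemma rr_S[simp]: "M \<in> Ob1 \<Longrightarrow> Sv (rr M) = e0 (Sh M)" using r_facts by blast
lemma rr_T[simp]: "M \<in> Ob1 \<Longrightarrow> Tv (rr M) = e0 (Th M)" using r_facts by blast
lemma li_ar[simp]: "M \<in> Ob1 \<Longrightarrow> li M \<in> Ar1" using li_facts by blast
lemma li_d[simp]: "M \<in> Ob1 \<Longrightarrow> d1 (li M) = M" using li_facts by blast
lemma li_c[simp]: "M \<in> Ob1 \<Longrightarrow> c1 (li M) = hc (Uh (Th M)) M" using li_facts by blast
lemma li_S[simp]: "M \<in> Ob1 \<Longrightarrow> Sv (li M) = e0 (Sh M)" using li_facts by blast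
lemma li_T[simp]: "M \<in> Ob1 \<Longrightarrow> Tv (li M) = e0 (Th M)" using li_facts by blast
lemma li_ll[simp]: "M \<in> Ob1 \<Longrightarrow> k1 (li M) (ll M) = e1 (hc (Uh (Th M)) M)" using li_facts by blast
lemma ll_li[simp]: "M \<in> Ob1 \<Longrightarrow> k1 (ll M) (li M) = e1 M" using li_facts by blast
lemma ri_ar[simp]: "M \<in> Ob1 \<Longrightarrow> ri M \<in> Ar1" using ri_facts by blast
lemma ri_d[simp]: "M \<in> Ob1 \<Longrightarrow> d1 (ri M) = M" using ri_facts by blast
lemma ri_c[simp]: "M \<in> Ob1 \<Longrightarrow> c1 (ri M) = hc M (Uh (Sh M))" using ri_facts by blast
lemma ri_S[simp]: "M \<in> Ob1 \<Longrightarrow> Sv (ri M) = e0 (Sh M)" using ri_facts by blast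
lemma ri_T[simp]: "M \<in> Ob1 \<Longrightarrow> Tv (ri M) = e0 (Th M)" using ri_facts by blast
lemma ri_rr[simp]: "M \<in> Ob1 \<Longrightarrow> k1 (ri M) (rr M) = e1 (hc M (Uh (Sh M)))" using ri_facts by blast
lemma rr_ri[simp]: "M \<in> Ob1 \<Longrightarrow> k1 (rr M) (ri M) = e1 M" using ri_facts by blast

lemma cancel_nested: "f \<in> Ar1 \<Longrightarrow> g \<in> Ar1 \<Longrightarrow> X \<in> Ar1 \<Longrightarrow> c1 X = d1 f \<Longrightarrow> c1 f = d1 g \<Longrightarrow>
   k1 g f = e1 (d1 f) \<Longrightarrow> k1 g (k1 f X) = X"
proof -
  assume a: "f \<in> Ar1" "g \<in> Ar1" "X \<in> Ar1" "c1 X = d1 f" "c1 f = d1 g" "k1 g f = e1 (d1 f)"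
  have "k1 g (k1 f X) = k1 (k1 g f) X" by (rule cat_assoc[OF cat1, symmetric]) (use a in simp_all)
  also have "\<dots> = X" by (simp only: a(6)) (use a in simp)
  finally show ?thesis .
qed

lemma ai_aa_n[simp]: "M \<in> Ob1 \<Longrightarrow> N \<in> Ob1 \<Longrightarrow> Q \<in> Ob1 \<Longrightarrow> Th M = Sh N \<Longrightarrow> Th N = Sh Q \<Longrightarrow>
  X \<in> Ar1 \<Longrightarrow> c1 X = hc (hc Q N) M \<Longrightarrow> k1 (ai Q N M) (k1 (aa Q N M) X) = X"
  by (rule cancel_nested) simp_all
lemma aa_ai_n[simp]: "M \<in> Ob1 \<Longrightarrow> N \<in> Ob1 \<Longrightarrow> Q \<in> Ob1 \<Longrightarrow> Th M = Sh N \<Longrightarrow> Th N = Sh Q \<Longrightarrow>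
  X \<in> Ar1 \<Longrightarrow> c1 X = hc Q (hc N M) \<Longrightarrow> k1 (aa Q N M) (k1 (ai Q N M) X) = X"
  by (rule cancel_nested) simp_all
lemma li_ll_n[simp]: "M \<in> Ob1 \<Longrightarrow> X \<in> Ar1 \<Longrightarrow> c1 X = hc (Uh (Th M)) M \<Longrightarrow> k1 (li M) (k1 (ll M) X) = X"
  by (rule cancel_nested) simp_all
lemma ll_li_n[simp]: "M \<in> Ob1 \<Longrightarrow> X \<in> Ar1 \<Longrightarrow> c1 X = M \<Longrightarrow> k1 (ll M) (k1 (li M) X) = X"
  by (rule cancel_nested) simp_all
lemma ri_rr_n[simp]: "M \<in> Ob1 \<Longrightarrow> X \<in> Ar1 \<Longrightarrow> c1 X = hc M (Uh (Sh M)) \<Longrightarrow> k1 (ri M) (k1 (rr M) X) = X"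
  by (rule cancel_nested) simp_all
lemma rr_ri_n[simp]: "M \<in> Ob1 \<Longrightarrow> X \<in> Ar1 \<Longrightarrow> c1 X = M \<Longrightarrow> k1 (rr M) (k1 (ri M) X) = X"
  by (rule cancel_nested) simp_all

lemma epi_cancel: "f \<in> Ar1 \<Longrightarrow> g \<in> Ar1 \<Longrightarrow> X \<in> Ar1 \<Longrightarrow> Y \<in> Ar1 \<Longrightarrow> c1 g = d1 f \<Longrightarrow> d1 X = c1 f \<Longrightarrow> d1 Y = c1 f \<Longrightarrow>
   k1 f g = e1 (c1 f) \<Longrightarrow> k1 X f = k1 Y f \<Longrightarrow> X = Y"
proof -
  assume a: "f \<in> Ar1" "g \<in> Ar1" "X \<in> Ar1" "Y \<in> Ar1" "c1 g = d1 f" "d1 X = c1 f" "d1 Y = c1 f"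
    "k1 f g = e1 (c1 f)" "k1 X f = k1 Y f"
  have "X = k1 X (k1 f g)" by (simp only: a(8)) (use a in simp)
  also have "\<dots> = k1 (k1 X f) g" by (rule cat_assoc[OF cat1, symmetric]) (use a in simp_all)
  also have "\<dots> = k1 (k1 Y f) g" by (simp only: a(9))
  also have "\<dots> = k1 Y (k1 f g)" by (rule cat_assoc[OF cat1]) (use a in simp_all)
  also have "\<dots> = Y" by (simp only: a(8)) (use a in simp)
  finally show ?thesis .
qed
lemma mono_cancel: "f \<in> Ar1 \<Longrightarrow> g \<in> Ar1 \<Longrightarrow> X \<in> Ar1 \<Longrightarrow> Y \<in> Ar1 \<Longrightarrow> c1 f = d1 g \<Longrightarrow> c1 X = d1 f \<Longrightarrow> c1 Y = d1 f \<Longrightarrow>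
   k1 g f = e1 (d1 f) \<Longrightarrow> k1 f X = k1 f Y \<Longrightarrow> X = Y"
  by (metis cancel_nested)

lemma whiskL: "\<alpha> \<in> Ar1 \<Longrightarrow> \<alpha>' \<in> Ar1 \<Longrightarrow> N \<in> Ob1 \<Longrightarrow> c1 \<alpha> = d1 \<alpha>' \<Longrightarrow> Tv \<alpha> = e0 (Sh N) \<Longrightarrow> Tv \<alpha>' = e0 (Sh N) \<Longrightarrow>
   hs (e1 N) (k1 \<alpha>' \<alpha>) = k1 (hs (e1 N) \<alpha>') (hs (e1 N) \<alpha>)"
  using interchange[of \<alpha> \<alpha>' "e1 N" "e1 N"] by simp
lemma whiskR: "\<beta> \<in> Ar1 \<Longrightarrow> \<beta>' \<in> Ar1 \<Longrightarrow> M \<in> Ob1 \<Longrightarrow> c1 \<beta> = d1 \<beta>' \<Longrightarrow> Sv \<beta> = e0 (Th M) \<Longrightarrow> Sv \<beta>' = e0 (Th M) \<Longrightarrow>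
   hs (k1 \<beta>' \<beta>) (e1 M) = k1 (hs \<beta>' (e1 M)) (hs \<beta> (e1 M))"
  using interchange[of "e1 M" "e1 M" \<beta> \<beta>'] by simp

lemma FL: assumes "h \<in> Ar1" "h' \<in> Ar1" "d1 h = d1 h'" "c1 h = c1 h'" "Tv h = Tv h'"
  and "hs (Us (Tv h)) h = hs (Us (Tv h')) h'" shows "h = h'"
proof -
  have "k1 h (ll (d1 h)) = k1 (ll (c1 h)) (hs (Us (Tv h)) h)" using l_nat[OF assms(1)] by simp
  also have "\<dots> = k1 h' (ll (d1 h'))" using l_nat[OF assms(2)] assms by simp
  finally have e: "k1 h (ll (d1 h)) = k1 h' (ll (d1 h))" using assms by simp
  show ?thesis
    by (rule epi_cancel[OF _ _ _ _ _ _ _ _ e, of "li (d1 h)"]) (use assms in simp_all)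
qed

lemma FR: assumes "h \<in> Ar1" "h' \<in> Ar1" "d1 h = d1 h'" "c1 h = c1 h'" "Sv h = Sv h'"
  and "hs h (Us (Sv h)) = hs h' (Us (Sv h'))" shows "h = h'"
proof -
  have "k1 h (rr (d1 h)) = k1 (rr (c1 h)) (hs h (Us (Sv h)))" using r_nat[OF assms(1)] by simp
  also have "\<dots> = k1 h' (rr (d1 h'))" using r_nat[OF assms(2)] assms by simp
  finally have e: "k1 h (rr (d1 h)) = k1 h' (rr (d1 h))" using assms by simp
  show ?thesis
    by (rule epi_cancel[OF _ _ _ _ _ _ _ _ e, of "ri (d1 h)"]) (use assms in simp_all)
qed

end


context pdc begin

lemma epi2:
  assumes "F \<in> Ar1" "G \<in> Ar1" "A \<in> Ar1" "B \<in> Ar1" "A' \<in> Ar1" "B' \<in> Ar1"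
    "c1 B = d1 A" "d1 F = c1 A" "d1 G = c1 A" "c1 A' = d1 A" "c1 B' = d1 B"
    "k1 A A' = e1 (c1 A)" "k1 B B' = e1 (c1 B)"
    "k1 F (k1 A B) = k1 G (k1 A B)"
  shows "F = G"
proof -
  have "k1 (k1 F A) B = k1 (k1 G A) B"
    using assms(14) cat_assoc[OF cat1, of B A F] cat_assoc[OF cat1, of B A G] assms by simp
  hence "k1 F A = k1 G A"
    by (intro epi_cancel[of B B' "k1 F A" "k1 G A"]) (use assms in simp_all)
  thus ?thesis
    by (intro epi_cancel[of A A' F G]) (use assms in simp_all)
qed

lemma K2:
  assumes M: "M \<in> Ob1" and N: "N \<in> Ob1" and MN: "Th M = Sh N"
  shows "k1 (ll (hc N M)) (aa (Uh (Th N)) N M) = hs (ll N) (e1 M)"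
proof -
  define I where "I = Uh (Th N)"
  have I: "I \<in> Ob1" "Sh I = Th N" "Th I = Th N" using N by (simp_all add: I_def)
  have UI: "Uh (Th N) = I" by (simp add: I_def)
  note ob = M N MN I UI
  define B where "B = hs (ai I I N) (e1 M)"
  define X where "X = k1 (aa I (hc I N) M) (hs (aa I I N) (e1 M))"
  have s1: "hs (e1 I) (k1 (ll (hc N M)) (aa I N M)) = k1 (hs (e1 I) (ll (hc N M))) (hs (e1 I) (aa I N M))"
    by (rule whiskL) (use ob in simp_all)
  have p: "k1 (aa I I (hc N M)) (aa (hc I I) N M) = k1 (hs (e1 I) (aa I N M)) X"
    unfolding X_def by (rule pentagon) (use ob in simp_all)
  have tr1: "k1 (hs (e1 I) (ll (hc N M))) (aa I I (hc N M)) = hs (rr I) (e1 (hc N M))"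
    using triangle[of "hc N M" I] ob by simp
  have an1: "k1 (aa I N M) (hs (hs (rr I) (e1 N)) (e1 M)) = k1 (hs (rr I) (e1 (hc N M))) (aa (hc I I) N M)"
    using a_nat[of "e1 M" "e1 N" "rr I"] ob by simp
  have L: "k1 (hs (e1 I) (k1 (ll (hc N M)) (aa I N M))) X = k1 (aa I N M) (hs (hs (rr I) (e1 N)) (e1 M))"
  proof -
    have "k1 (hs (e1 I) (k1 (ll (hc N M)) (aa I N M))) X
        = k1 (hs (e1 I) (ll (hc N M))) (k1 (hs (e1 I) (aa I N M)) X)"
      unfolding s1 X_def by (rule cat_assoc[OF cat1]) (use ob in simp_all)
    also have "\<dots> = k1 (hs (e1 I) (ll (hc N M))) (k1 (aa I I (hc N M)) (aa (hc I I) N M))"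
      by (simp only: p)
    also have "\<dots> = k1 (k1 (hs (e1 I) (ll (hc N M))) (aa I I (hc N M))) (aa (hc I I) N M)"
      by (rule cat_assoc[OF cat1, symmetric]) (use ob in simp_all)
    also have "\<dots> = k1 (hs (rr I) (e1 (hc N M))) (aa (hc I I) N M)" by (simp only: tr1)
    finally show ?thesis using an1 by simp
  qed
  have an2: "k1 (aa I N M) (hs (hs (e1 I) (ll N)) (e1 M)) = k1 (hs (e1 I) (hs (ll N) (e1 M))) (aa I (hc I N) M)"
    using a_nat[of "e1 M" "ll N" "e1 I"] ob by simp
  have tr2: "k1 (hs (e1 I) (ll N)) (aa I I N) = hs (rr I) (e1 N)"
    using triangle[of N I] ob by simp
  have R: "k1 (hs (e1 I) (hs (ll N) (e1 M))) X = k1 (aa I N M) (hs (hs (rr I) (e1 N)) (e1 M))"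
  proof -
    have "k1 (hs (e1 I) (hs (ll N) (e1 M))) X = k1 (k1 (hs (e1 I) (hs (ll N) (e1 M))) (aa I (hc I N) M)) (hs (aa I I N) (e1 M))"
      unfolding X_def by (rule cat_assoc[OF cat1, symmetric]) (use ob in simp_all)
    also have "\<dots> = k1 (k1 (aa I N M) (hs (hs (e1 I) (ll N)) (e1 M))) (hs (aa I I N) (e1 M))"
      by (simp only: an2)
    also have "\<dots> = k1 (aa I N M) (k1 (hs (hs (e1 I) (ll N)) (e1 M)) (hs (aa I I N) (e1 M)))"
      by (rule cat_assoc[OF cat1]) (use ob in simp_all)
    also have "k1 (hs (hs (e1 I) (ll N)) (e1 M)) (hs (aa I I N) (e1 M)) = hs (k1 (hs (e1 I) (ll N)) (aa I I N)) (e1 M)"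
      by (rule whiskR[symmetric]) (use ob in simp_all)
    finally show ?thesis by (simp only: tr2)
  qed
  have eq: "k1 (hs (e1 I) (k1 (ll (hc N M)) (aa I N M))) X = k1 (hs (e1 I) (hs (ll N) (e1 M))) X"
    using L R by simp
  have Binv: "k1 (hs (aa I I N) (e1 M)) B = e1 (hc (hc I (hc I N)) M)"
    unfolding B_def using whiskR[of "ai I I N" "aa I I N" M] ob by simp
  have eq2: "hs (e1 I) (k1 (ll (hc N M)) (aa I N M)) = hs (e1 I) (hs (ll N) (e1 M))"
    by (rule epi2[of _ _ "aa I (hc I N) M" "hs (aa I I N) (e1 M)" "ai I (hc I N) M" B])
       (use ob Binv eq in \<open>simp_all add: X_def B_def\<close>)
  show ?thesis
    by (rule FL) (use ob eq2 in simp_all)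
qed

lemma K1:
  assumes M: "M \<in> Ob1" and N: "N \<in> Ob1" and MN: "Th M = Sh N"
  shows "rr (hc N M) = k1 (hs (e1 N) (rr M)) (aa N M (Uh (Sh M)))"
proof -
  define J where "J = Uh (Sh M)"
  have J: "J \<in> Ob1" "Sh J = Sh M" "Th J = Sh M" using M by (simp_all add: J_def)
  have UJ: "Uh (Sh M) = J" by (simp add: J_def)
  note ob = M N MN J UJ
  have tr1: "k1 (hs (e1 (hc N M)) (ll J)) (aa (hc N M) J J) = hs (rr (hc N M)) (e1 J)"
    using triangle[of J "hc N M"] ob by simp
  have an1: "k1 (aa N M J) (hs (e1 (hc N M)) (ll J)) = k1 (hs (e1 N) (hs (e1 M) (ll J))) (aa N M (hc J J))"
    using a_nat[of "ll J" "e1 M" "e1 N"] ob by simp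
  have p: "k1 (aa N M (hc J J)) (aa (hc N M) J J) = k1 (hs (e1 N) (aa M J J)) (k1 (aa N (hc M J) J) (hs (aa N M J) (e1 J)))"
    by (rule pentagon) (use ob in simp_all)
  have wl: "k1 (hs (e1 N) (hs (e1 M) (ll J))) (hs (e1 N) (aa M J J)) = hs (e1 N) (k1 (hs (e1 M) (ll J)) (aa M J J))"
    by (rule whiskL[symmetric]) (use ob in simp_all)
  have tr2: "k1 (hs (e1 M) (ll J)) (aa M J J) = hs (rr M) (e1 J)"
    using triangle[of J M] ob by simp
  have an2: "k1 (aa N M J) (hs (hs (e1 N) (rr M)) (e1 J)) = k1 (hs (e1 N) (hs (rr M) (e1 J))) (aa N (hc M J) J)"
    using a_nat[of "e1 J" "rr M" "e1 N"] ob by simp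
  have wr: "hs (k1 (hs (e1 N) (rr M)) (aa N M J)) (e1 J) = k1 (hs (hs (e1 N) (rr M)) (e1 J)) (hs (aa N M J) (e1 J))"
    by (rule whiskR) (use ob in simp_all)
  have L: "k1 (aa N M J) (hs (rr (hc N M)) (e1 J)) = k1 (aa N M J) (k1 (hs (hs (e1 N) (rr M)) (e1 J)) (hs (aa N M J) (e1 J)))"
  proof -
    have "k1 (aa N M J) (hs (rr (hc N M)) (e1 J)) = k1 (aa N M J) (k1 (hs (e1 (hc N M)) (ll J)) (aa (hc N M) J J))"
      by (simp only: tr1)
    also have "\<dots> = k1 (k1 (aa N M J) (hs (e1 (hc N M)) (ll J))) (aa (hc N M) J J)"
      by (rule cat_assoc[OF cat1, symmetric]) (use ob in simp_all)
    also have "\<dots> = k1 (hs (e1 N) (hs (e1 M) (ll J))) (k1 (aa N M (hc J J)) (aa (hc N M) J J))"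
      unfolding an1 by (rule cat_assoc[OF cat1]) (use ob in simp_all)
    also have "\<dots> = k1 (hs (e1 N) (hs (e1 M) (ll J))) (k1 (hs (e1 N) (aa M J J)) (k1 (aa N (hc M J) J) (hs (aa N M J) (e1 J))))"
      by (simp only: p)
    also have "\<dots> = k1 (k1 (hs (e1 N) (hs (e1 M) (ll J))) (hs (e1 N) (aa M J J))) (k1 (aa N (hc M J) J) (hs (aa N M J) (e1 J)))"
      by (rule cat_assoc[OF cat1, symmetric]) (use ob in simp_all)
    also have "\<dots> = k1 (hs (e1 N) (hs (rr M) (e1 J))) (k1 (aa N (hc M J) J) (hs (aa N M J) (e1 J)))"
      by (simp only: wl tr2)
    also have "\<dots> = k1 (k1 (hs (e1 N) (hs (rr M) (e1 J))) (aa N (hc M J) J)) (hs (aa N M J) (e1 J))"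
      by (rule cat_assoc[OF cat1, symmetric]) (use ob in simp_all)
    also have "\<dots> = k1 (k1 (aa N M J) (hs (hs (e1 N) (rr M)) (e1 J))) (hs (aa N M J) (e1 J))"
      by (simp only: an2)
    also have "\<dots> = k1 (aa N M J) (k1 (hs (hs (e1 N) (rr M)) (e1 J)) (hs (aa N M J) (e1 J)))"
      by (rule cat_assoc[OF cat1]) (use ob in simp_all)
    finally show ?thesis .
  qed
  have eq: "hs (rr (hc N M)) (e1 J) = hs (k1 (hs (e1 N) (rr M)) (aa N M J)) (e1 J)"
    by (rule mono_cancel[of "aa N M J" "ai N M J"]) (use ob L wr in simp_all)
  show ?thesis
    by (rule FR) (use ob eq in simp_all)
qed

end


context pdc begin

lemma k1_assoc: "f \<in> Ar1 \<Longrightarrow> g \<in> Ar1 \<Longrightarrow> h \<in> Ar1 \<Longrightarrow> c1 f = d1 g \<Longrightarrow> c1 g = d1 h \<Longrightarrow>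
  k1 (k1 h g) f = k1 h (k1 g f)" by (rule cat_assoc[OF cat1])

lemma use2: "k1 a b = c \<Longrightarrow> z \<in> Ar1 \<Longrightarrow> b \<in> Ar1 \<Longrightarrow> a \<in> Ar1 \<Longrightarrow> c1 z = d1 b \<Longrightarrow> c1 b = d1 a \<Longrightarrow>
  k1 a (k1 b z) = k1 c z"
  using k1_assoc by metis

context
  fixes f fh p1 p2
  assumes f: "f \<in> Ar0" and fh: "fh \<in> Ob1" "Sh fh = d0 f" "Th fh = c0 f"
    and p1: "p1 \<in> Ar1" "d1 p1 = fh" "c1 p1 = Uh (c0 f)" "Sv p1 = f" "Tv p1 = e0 (c0 f)"
    and p2: "p2 \<in> Ar1" "d1 p2 = Uh (d0 f)" "c1 p2 = fh" "Sv p2 = e0 (d0 f)" "Tv p2 = f"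
    and pp: "k1 p1 p2 = Us f"
    and pc: "k1 (ll fh) (hs p1 p2) = rr fh"
begin

lemma L1_surj:
  assumes M: "M \<in> Ob1" "Sh M = c0 f" and psi: "\<psi> \<in> Ar1" "c1 \<psi> = M"
    and u: "u \<in> Ar0" "c0 u = d0 f" "d0 u = Sh (d1 \<psi>)" and sv: "Sv \<psi> = k0 f u"
  shows "k1 (k1 (rr M) (hs (e1 M) p1)) (k1 (hs \<psi> (k1 p2 (Us u))) (ri (d1 \<psi>))) = \<psi>"
proof -
  note ob = f fh p1 p2 M psi u sv
  have i: "k1 (hs (e1 M) p1) (hs \<psi> (k1 p2 (Us u))) = hs \<psi> (Us (k0 f u))"
  proof -
    have "k1 (hs (e1 M) p1) (hs \<psi> (k1 p2 (Us u))) = hs (k1 (e1 M) \<psi>) (k1 p1 (k1 p2 (Us u)))"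
      by (rule interchange[symmetric]) (use ob in simp_all)
    also have "\<dots> = hs \<psi> (k1 (k1 p1 p2) (Us u))" using ob by simp
    also have "\<dots> = hs \<psi> (Us (k0 f u))" using ob pp by simp
    finally show ?thesis .
  qed
  have r: "k1 (rr M) (hs \<psi> (Us (Sv \<psi>))) = k1 \<psi> (rr (d1 \<psi>))" using r_nat[OF psi(1)] psi by simp
  have "k1 (k1 (rr M) (hs (e1 M) p1)) (k1 (hs \<psi> (k1 p2 (Us u))) (ri (d1 \<psi>)))
      = k1 (rr M) (k1 (hs (e1 M) p1) (k1 (hs \<psi> (k1 p2 (Us u))) (ri (d1 \<psi>))))"
    by (rule k1_assoc) (use ob in simp_all)
  also have "\<dots> = k1 (rr M) (k1 (hs \<psi> (Us (k0 f u))) (ri (d1 \<psi>)))"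
    by (subst use2[OF i]) (use ob in simp_all)
  also have "\<dots> = k1 (k1 \<psi> (rr (d1 \<psi>))) (ri (d1 \<psi>))"
    by (subst use2[OF r[unfolded sv]]) (use ob in simp_all)
  also have "\<dots> = \<psi>" using ob by simp
  finally show ?thesis .
qed

lemma L1_Z:
  assumes M: "M \<in> Ob1" "Sh M = c0 f"
  shows "hs (k1 (rr M) (hs (e1 M) p1)) p2 = rr (hc M fh)"
proof -
  note ob = f fh p1 p2 M
  have "hs (k1 (rr M) (hs (e1 M) p1)) p2 = hs (k1 (rr M) (hs (e1 M) p1)) (k1 (e1 fh) p2)" using ob by simp
  also have "\<dots> = k1 (hs (rr M) (e1 fh)) (hs (hs (e1 M) p1) p2)"
    by (rule interchange) (use ob in simp_all)
  also have "hs (rr M) (e1 fh) = k1 (hs (e1 M) (ll fh)) (aa M (Uh (c0 f)) fh)"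
    using triangle[of fh M] ob by simp
  also have "k1 (k1 (hs (e1 M) (ll fh)) (aa M (Uh (c0 f)) fh)) (hs (hs (e1 M) p1) p2)
     = k1 (hs (e1 M) (ll fh)) (k1 (aa M (Uh (c0 f)) fh) (hs (hs (e1 M) p1) p2))"
    by (rule k1_assoc) (use ob in simp_all)
  also have "k1 (aa M (Uh (c0 f)) fh) (hs (hs (e1 M) p1) p2) = k1 (hs (e1 M) (hs p1 p2)) (aa M fh (Uh (d0 f)))"
    using a_nat[of p2 p1 "e1 M"] ob by simp
  also have "k1 (hs (e1 M) (ll fh)) (k1 (hs (e1 M) (hs p1 p2)) (aa M fh (Uh (d0 f))))
      = k1 (k1 (hs (e1 M) (ll fh)) (hs (e1 M) (hs p1 p2))) (aa M fh (Uh (d0 f)))"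
    by (rule k1_assoc[symmetric]) (use ob in simp_all)
  also have "k1 (hs (e1 M) (ll fh)) (hs (e1 M) (hs p1 p2)) = hs (e1 M) (k1 (ll fh) (hs p1 p2))"
    by (rule whiskL[symmetric]) (use ob in simp_all)
  also have "\<dots> = hs (e1 M) (rr fh)" by (simp only: pc)
  also have "k1 (hs (e1 M) (rr fh)) (aa M fh (Uh (d0 f))) = rr (hc M fh)"
    using K1[of fh M] ob by simp
  finally show ?thesis .
qed

lemma L1_inv:
  assumes M: "M \<in> Ob1" "Sh M = c0 f" and chi: "\<chi> \<in> Ar1" "c1 \<chi> = hc M fh"
  shows "k1 (hs (k1 (k1 (rr M) (hs (e1 M) p1)) \<chi>) (k1 p2 (Us (Sv \<chi>)))) (ri (d1 \<chi>)) = \<chi>"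
proof -
  note ob = f fh p1 p2 M chi
  have "hs (k1 (k1 (rr M) (hs (e1 M) p1)) \<chi>) (k1 p2 (Us (Sv \<chi>)))
      = k1 (hs (k1 (rr M) (hs (e1 M) p1)) p2) (hs \<chi> (Us (Sv \<chi>)))"
    by (rule interchange) (use ob in simp_all)
  also have "\<dots> = k1 (rr (hc M fh)) (hs \<chi> (Us (Sv \<chi>)))" using L1_Z[OF M] by simp
  also have "\<dots> = k1 \<chi> (rr (d1 \<chi>))" using r_nat[OF chi(1)] chi by simp
  finally have e: "hs (k1 (k1 (rr M) (hs (e1 M) p1)) \<chi>) (k1 p2 (Us (Sv \<chi>))) = k1 \<chi> (rr (d1 \<chi>))" .
  show ?thesis unfolding e using ob by simp
qed

lemma L3_surj:
  assumes N: "N \<in> Ob1" "Th N = d0 f" and psi: "\<psi> \<in> Ar1" "d1 \<psi> = N"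
    and v: "v \<in> Ar0" "d0 v = c0 f" "c0 v = Th (c1 \<psi>)" and tv: "Tv \<psi> = k0 v f"
  shows "k1 (k1 (ll (c1 \<psi>)) (hs (k1 (Us v) p1) \<psi>)) (k1 (hs p2 (e1 N)) (li N)) = \<psi>"
proof -
  note ob = f fh p1 p2 N psi v tv
  have i: "k1 (hs (k1 (Us v) p1) \<psi>) (hs p2 (e1 N)) = hs (Us (k0 v f)) \<psi>"
  proof -
    have "k1 (hs (k1 (Us v) p1) \<psi>) (hs p2 (e1 N)) = hs (k1 (k1 (Us v) p1) p2) (k1 \<psi> (e1 N))"
      by (rule interchange[symmetric]) (use ob in simp_all)
    also have "\<dots> = hs (k1 (Us v) (k1 p1 p2)) \<psi>" using ob by simp
    also have "\<dots> = hs (Us (k0 v f)) \<psi>" using ob pp by simp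
    finally show ?thesis .
  qed
  have l: "k1 (ll (c1 \<psi>)) (hs (Us (Tv \<psi>)) \<psi>) = k1 \<psi> (ll (d1 \<psi>))" using l_nat[OF psi(1)] by simp
  have "k1 (k1 (ll (c1 \<psi>)) (hs (k1 (Us v) p1) \<psi>)) (k1 (hs p2 (e1 N)) (li N))
      = k1 (ll (c1 \<psi>)) (k1 (hs (k1 (Us v) p1) \<psi>) (k1 (hs p2 (e1 N)) (li N)))"
    by (rule k1_assoc) (use ob in simp_all)
  also have "\<dots> = k1 (ll (c1 \<psi>)) (k1 (hs (Us (k0 v f)) \<psi>) (li N))"
    by (subst use2[OF i]) (use ob in simp_all)
  also have "\<dots> = k1 (k1 \<psi> (ll (d1 \<psi>))) (li N)"
    by (subst use2[OF l[unfolded tv]]) (use ob in simp_all)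
  also have "\<dots> = \<psi>" using ob by simp
  finally show ?thesis .
qed

lemma L3_Z:
  assumes N: "N \<in> Ob1" "Th N = d0 f"
  shows "k1 (ll (hc fh N)) (hs p1 (k1 (hs p2 (e1 N)) (li N))) = e1 (hc fh N)"
proof -
  note ob = f fh p1 p2 N
  have "hs p1 (k1 (hs p2 (e1 N)) (li N)) = hs (k1 p1 (e1 fh)) (k1 (hs p2 (e1 N)) (li N))" using ob by simp
  also have "\<dots> = k1 (hs p1 (hs p2 (e1 N))) (hs (e1 fh) (li N))"
    by (rule interchange) (use ob in simp_all)
  finally have e1: "hs p1 (k1 (hs p2 (e1 N)) (li N)) = k1 (hs p1 (hs p2 (e1 N))) (hs (e1 fh) (li N))" .
  have an: "k1 (aa (Uh (c0 f)) fh N) (hs (hs p1 p2) (e1 N)) = k1 (hs p1 (hs p2 (e1 N))) (aa fh (Uh (d0 f)) N)"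
    using a_nat[of "e1 N" p2 p1] ob by simp
  have k2: "k1 (ll (hc fh N)) (aa (Uh (c0 f)) fh N) = hs (ll fh) (e1 N)"
    using K2[of N fh] ob by simp
  have tr: "k1 (hs (e1 fh) (ll N)) (aa fh (Uh (d0 f)) N) = hs (rr fh) (e1 N)"
    using triangle[of N fh] ob by simp
  have wr: "k1 (hs (ll fh) (e1 N)) (hs (hs p1 p2) (e1 N)) = hs (rr fh) (e1 N)"
    using whiskR[of "hs p1 p2" "ll fh" N] ob pc by simp
  have wl: "k1 (hs (e1 fh) (ll N)) (hs (e1 fh) (li N)) = e1 (hc fh N)"
    using whiskL[of "li N" "ll N" fh] ob by simp
  have "k1 (ll (hc fh N)) (k1 (hs p1 (hs p2 (e1 N))) (hs (e1 fh) (li N)))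
     = k1 (ll (hc fh N)) (k1 (k1 (hs p1 (hs p2 (e1 N))) (k1 (aa fh (Uh (d0 f)) N) (ai fh (Uh (d0 f)) N))) (hs (e1 fh) (li N)))"
    using ob by simp
  also have "\<dots> = k1 (ll (hc fh N)) (k1 (k1 (k1 (aa (Uh (c0 f)) fh N) (hs (hs p1 p2) (e1 N))) (ai fh (Uh (d0 f)) N)) (hs (e1 fh) (li N)))"
    by (subst k1_assoc[symmetric, of "ai fh (Uh (d0 f)) N"]) (use ob an in simp_all)
  also have "\<dots> = k1 (k1 (ll (hc fh N)) (aa (Uh (c0 f)) fh N)) (k1 (hs (hs p1 p2) (e1 N)) (k1 (ai fh (Uh (d0 f)) N) (hs (e1 fh) (li N))))"
    using ob by simp
  also have "\<dots> = k1 (hs (rr fh) (e1 N)) (k1 (ai fh (Uh (d0 f)) N) (hs (e1 fh) (li N)))"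
    by (simp only: k2, subst use2[OF wr]) (use ob in simp_all)
  also have "\<dots> = k1 (k1 (k1 (hs (e1 fh) (ll N)) (aa fh (Uh (d0 f)) N)) (ai fh (Uh (d0 f)) N)) (hs (e1 fh) (li N))"
    unfolding tr[symmetric] by (rule k1_assoc[symmetric]) (use ob in simp_all)
  also have "\<dots> = k1 (hs (e1 fh) (ll N)) (hs (e1 fh) (li N))" using ob by simp
  also have "\<dots> = e1 (hc fh N)" by (rule wl)
  finally show ?thesis unfolding e1 .
qed

lemma L3_inv:
  assumes N: "N \<in> Ob1" "Th N = d0 f" and chi: "\<chi> \<in> Ar1" "d1 \<chi> = hc fh N"
  shows "k1 (ll (c1 \<chi>)) (hs (k1 (Us (Tv \<chi>)) p1) (k1 \<chi> (k1 (hs p2 (e1 N)) (li N)))) = \<chi>"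
proof -
  note ob = f fh p1 p2 N chi
  have "hs (k1 (Us (Tv \<chi>)) p1) (k1 \<chi> (k1 (hs p2 (e1 N)) (li N)))
      = k1 (hs (Us (Tv \<chi>)) \<chi>) (hs p1 (k1 (hs p2 (e1 N)) (li N)))"
    by (rule interchange) (use ob in simp_all)
  hence "k1 (ll (c1 \<chi>)) (hs (k1 (Us (Tv \<chi>)) p1) (k1 \<chi> (k1 (hs p2 (e1 N)) (li N))))
     = k1 (k1 (ll (c1 \<chi>)) (hs (Us (Tv \<chi>)) \<chi>)) (hs p1 (k1 (hs p2 (e1 N)) (li N)))"
    by (simp only:) (rule k1_assoc[symmetric], use ob in simp_all)
  also have "\<dots> = k1 (k1 \<chi> (ll (hc fh N))) (hs p1 (k1 (hs p2 (e1 N)) (li N)))"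
    using l_nat[OF chi(1)] chi by simp
  also have "\<dots> = k1 \<chi> (k1 (ll (hc fh N)) (hs p1 (k1 (hs p2 (e1 N)) (li N))))"
    by (rule k1_assoc) (use ob in simp_all)
  also have "\<dots> = \<chi>" unfolding L3_Z[OF N] using ob by simp
  finally show ?thesis .
qed

end
context
  fixes f fc q1 q2
  assumes f: "f \<in> Ar0" and fc: "fc \<in> Ob1" "Sh fc = c0 f" "Th fc = d0 f"
    and q1: "q1 \<in> Ar1" "d1 q1 = fc" "c1 q1 = Uh (c0 f)" "Sv q1 = e0 (c0 f)" "Tv q1 = f"
    and q2: "q2 \<in> Ar1" "d1 q2 = Uh (d0 f)" "c1 q2 = fc" "Sv q2 = f" "Tv q2 = e0 (d0 f)"
    and qq: "k1 q1 q2 = Us f"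
    and qc: "k1 (rr fc) (hs q2 q1) = ll fc"
begin

lemma L2_surj:
  assumes M: "M \<in> Ob1" "Th M = c0 f" and psi: "\<psi> \<in> Ar1" "c1 \<psi> = M"
    and v: "v \<in> Ar0" "c0 v = d0 f" "d0 v = Th (d1 \<psi>)" and tv: "Tv \<psi> = k0 f v"
  shows "k1 (k1 (ll M) (hs q1 (e1 M))) (k1 (hs (k1 q2 (Us v)) \<psi>) (li (d1 \<psi>))) = \<psi>"
proof -
  note ob = f fc q1 q2 M psi v tv
  have i: "k1 (hs q1 (e1 M)) (hs (k1 q2 (Us v)) \<psi>) = hs (Us (k0 f v)) \<psi>"
  proof -
    have "k1 (hs q1 (e1 M)) (hs (k1 q2 (Us v)) \<psi>) = hs (k1 q1 (k1 q2 (Us v))) (k1 (e1 M) \<psi>)"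
      by (rule interchange[symmetric]) (use ob in simp_all)
    also have "\<dots> = hs (k1 (k1 q1 q2) (Us v)) \<psi>" using ob by simp
    also have "\<dots> = hs (Us (k0 f v)) \<psi>" using ob qq by simp
    finally show ?thesis .
  qed
  have l: "k1 (ll M) (hs (Us (Tv \<psi>)) \<psi>) = k1 \<psi> (ll (d1 \<psi>))" using l_nat[OF psi(1)] psi by simp
  have "k1 (k1 (ll M) (hs q1 (e1 M))) (k1 (hs (k1 q2 (Us v)) \<psi>) (li (d1 \<psi>)))
      = k1 (ll M) (k1 (hs q1 (e1 M)) (k1 (hs (k1 q2 (Us v)) \<psi>) (li (d1 \<psi>))))"
    by (rule k1_assoc) (use ob in simp_all)
  also have "\<dots> = k1 (ll M) (k1 (hs (Us (k0 f v)) \<psi>) (li (d1 \<psi>)))"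
    by (subst use2[OF i]) (use ob in simp_all)
  also have "\<dots> = k1 (k1 \<psi> (ll (d1 \<psi>))) (li (d1 \<psi>))"
    by (subst use2[OF l[unfolded tv]]) (use ob in simp_all)
  also have "\<dots> = \<psi>" using ob by simp
  finally show ?thesis .
qed

lemma L2_Z:
  assumes M: "M \<in> Ob1" "Th M = c0 f"
  shows "hs q2 (k1 (ll M) (hs q1 (e1 M))) = ll (hc fc M)"
proof -
  note ob = f fc q1 q2 M
  let ?Ud = "Uh (d0 f)" and ?Uc = "Uh (c0 f)"
  have "hs q2 (k1 (ll M) (hs q1 (e1 M))) = hs (k1 (e1 fc) q2) (k1 (ll M) (hs q1 (e1 M)))" using ob by simp
  also have "\<dots> = k1 (hs (e1 fc) (ll M)) (hs q2 (hs q1 (e1 M)))"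
    by (rule interchange) (use ob in simp_all)
  finally have e: "hs q2 (k1 (ll M) (hs q1 (e1 M))) = k1 (hs (e1 fc) (ll M)) (hs q2 (hs q1 (e1 M)))" .
  have an: "k1 (aa fc ?Uc M) (hs (hs q2 q1) (e1 M)) = k1 (hs q2 (hs q1 (e1 M))) (aa ?Ud fc M)"
    using a_nat[of "e1 M" q1 q2] ob by simp
  have tr: "k1 (hs (e1 fc) (ll M)) (aa fc ?Uc M) = hs (rr fc) (e1 M)"
    using triangle[of M fc] ob by simp
  have wr: "k1 (hs (rr fc) (e1 M)) (hs (hs q2 q1) (e1 M)) = hs (ll fc) (e1 M)"
    using whiskR[of "hs q2 q1" "rr fc" M] ob qc by simp
  have k2: "k1 (ll (hc fc M)) (aa ?Ud fc M) = hs (ll fc) (e1 M)"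
    using K2[of M fc] ob by simp
  have X: "hs q2 (hs q1 (e1 M)) = k1 (k1 (aa fc ?Uc M) (hs (hs q2 q1) (e1 M))) (ai ?Ud fc M)"
    unfolding an using ob by simp
  have "k1 (hs (e1 fc) (ll M)) (hs q2 (hs q1 (e1 M)))
     = k1 (k1 (hs (e1 fc) (ll M)) (aa fc ?Uc M)) (k1 (hs (hs q2 q1) (e1 M)) (ai ?Ud fc M))"
    unfolding X using ob by simp
  also have "\<dots> = k1 (k1 (hs (rr fc) (e1 M)) (hs (hs q2 q1) (e1 M))) (ai ?Ud fc M)"
    unfolding tr by (rule k1_assoc[symmetric]) (use ob in simp_all)
  also have "\<dots> = k1 (k1 (ll (hc fc M)) (aa ?Ud fc M)) (ai ?Ud fc M)"
    unfolding wr k2 ..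
  also have "\<dots> = ll (hc fc M)" using ob by simp
  finally show ?thesis unfolding e .
qed

lemma L2_inv:
  assumes M: "M \<in> Ob1" "Th M = c0 f" and chi: "\<chi> \<in> Ar1" "c1 \<chi> = hc fc M"
  shows "k1 (hs (k1 q2 (Us (Tv \<chi>))) (k1 (k1 (ll M) (hs q1 (e1 M))) \<chi>)) (li (d1 \<chi>)) = \<chi>"
proof -
  note ob = f fc q1 q2 M chi
  have "hs (k1 q2 (Us (Tv \<chi>))) (k1 (k1 (ll M) (hs q1 (e1 M))) \<chi>)
      = k1 (hs q2 (k1 (ll M) (hs q1 (e1 M)))) (hs (Us (Tv \<chi>)) \<chi>)"
    by (rule interchange) (use ob in simp_all)
  also have "\<dots> = k1 (ll (hc fc M)) (hs (Us (Tv \<chi>)) \<chi>)" using L2_Z[OF M] by simp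
  also have "\<dots> = k1 \<chi> (ll (d1 \<chi>))" using l_nat[OF chi(1)] chi by simp
  finally have e: "hs (k1 q2 (Us (Tv \<chi>))) (k1 (k1 (ll M) (hs q1 (e1 M))) \<chi>) = k1 \<chi> (ll (d1 \<chi>))" .
  show ?thesis unfolding e using ob by simp
qed

lemma L4_surj:
  assumes N: "N \<in> Ob1" "Sh N = d0 f" and psi: "\<psi> \<in> Ar1" "d1 \<psi> = N"
    and u: "u \<in> Ar0" "d0 u = c0 f" "c0 u = Sh (c1 \<psi>)" and sv: "Sv \<psi> = k0 u f"
  shows "k1 (k1 (rr (c1 \<psi>)) (hs \<psi> (k1 (Us u) q1))) (k1 (hs (e1 N) q2) (ri N)) = \<psi>"
proof -
  note ob = f fc q1 q2 N psi u sv
  have i: "k1 (hs \<psi> (k1 (Us u) q1)) (hs (e1 N) q2) = hs \<psi> (Us (k0 u f))"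
  proof -
    have "k1 (hs \<psi> (k1 (Us u) q1)) (hs (e1 N) q2) = hs (k1 \<psi> (e1 N)) (k1 (k1 (Us u) q1) q2)"
      by (rule interchange[symmetric]) (use ob in simp_all)
    also have "\<dots> = hs \<psi> (k1 (Us u) (k1 q1 q2))" using ob by simp
    also have "\<dots> = hs \<psi> (Us (k0 u f))" using ob qq by simp
    finally show ?thesis .
  qed
  have r: "k1 (rr (c1 \<psi>)) (hs \<psi> (Us (Sv \<psi>))) = k1 \<psi> (rr (d1 \<psi>))" using r_nat[OF psi(1)] by simp
  have "k1 (k1 (rr (c1 \<psi>)) (hs \<psi> (k1 (Us u) q1))) (k1 (hs (e1 N) q2) (ri N))
      = k1 (rr (c1 \<psi>)) (k1 (hs \<psi> (k1 (Us u) q1)) (k1 (hs (e1 N) q2) (ri N)))"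
    by (rule k1_assoc) (use ob in simp_all)
  also have "\<dots> = k1 (rr (c1 \<psi>)) (k1 (hs \<psi> (Us (k0 u f))) (ri N))"
    by (subst use2[OF i]) (use ob in simp_all)
  also have "\<dots> = k1 (k1 \<psi> (rr (d1 \<psi>))) (ri N)"
    by (subst use2[OF r[unfolded sv]]) (use ob in simp_all)
  also have "\<dots> = \<psi>" using ob by simp
  finally show ?thesis .
qed

lemma L4_Z:
  assumes N: "N \<in> Ob1" "Sh N = d0 f"
  shows "k1 (rr (hc N fc)) (hs (k1 (hs (e1 N) q2) (ri N)) q1) = e1 (hc N fc)"
proof -
  note ob = f fc q1 q2 N
  let ?Ud = "Uh (d0 f)" and ?Uc = "Uh (c0 f)"
  have "hs (k1 (hs (e1 N) q2) (ri N)) q1 = hs (k1 (hs (e1 N) q2) (ri N)) (k1 q1 (e1 fc))" using ob by simp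
  also have "\<dots> = k1 (hs (hs (e1 N) q2) q1) (hs (ri N) (e1 fc))"
    by (rule interchange) (use ob in simp_all)
  finally have e: "hs (k1 (hs (e1 N) q2) (ri N)) q1 = k1 (hs (hs (e1 N) q2) q1) (hs (ri N) (e1 fc))" .
  have an: "k1 (aa N fc ?Uc) (hs (hs (e1 N) q2) q1) = k1 (hs (e1 N) (hs q2 q1)) (aa N ?Ud fc)"
    using a_nat[of q1 q2 "e1 N"] ob by simp
  have k1e: "rr (hc N fc) = k1 (hs (e1 N) (rr fc)) (aa N fc ?Uc)"
    using K1[of fc N] ob by simp
  have wl: "k1 (hs (e1 N) (rr fc)) (hs (e1 N) (hs q2 q1)) = hs (e1 N) (ll fc)"
    using whiskL[of "hs q2 q1" "rr fc" N] ob qc by simp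
  have tr: "k1 (hs (e1 N) (ll fc)) (aa N ?Ud fc) = hs (rr N) (e1 fc)"
    using triangle[of fc N] ob by simp
  have wr: "k1 (hs (rr N) (e1 fc)) (hs (ri N) (e1 fc)) = e1 (hc N fc)"
    using whiskR[of "ri N" "rr N" fc] ob by simp
  have "k1 (rr (hc N fc)) (k1 (hs (hs (e1 N) q2) q1) (hs (ri N) (e1 fc)))
     = k1 (hs (e1 N) (rr fc)) (k1 (k1 (aa N fc ?Uc) (hs (hs (e1 N) q2) q1)) (hs (ri N) (e1 fc)))"
    unfolding k1e using ob by simp
  also have "\<dots> = k1 (k1 (hs (e1 N) (rr fc)) (hs (e1 N) (hs q2 q1))) (k1 (aa N ?Ud fc) (hs (ri N) (e1 fc)))"
    unfolding an using ob by simp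
  also have "\<dots> = k1 (k1 (hs (e1 N) (ll fc)) (aa N ?Ud fc)) (hs (ri N) (e1 fc))"
    unfolding wl by (rule k1_assoc[symmetric]) (use ob in simp_all)
  also have "\<dots> = e1 (hc N fc)" unfolding tr wr ..
  finally show ?thesis unfolding e .
qed

lemma L4_inv:
  assumes N: "N \<in> Ob1" "Sh N = d0 f" and chi: "\<chi> \<in> Ar1" "d1 \<chi> = hc N fc"
  shows "k1 (rr (c1 \<chi>)) (hs (k1 \<chi> (k1 (hs (e1 N) q2) (ri N))) (k1 (Us (Sv \<chi>)) q1)) = \<chi>"
proof -
  note ob = f fc q1 q2 N chi
  have "hs (k1 \<chi> (k1 (hs (e1 N) q2) (ri N))) (k1 (Us (Sv \<chi>)) q1)
      = k1 (hs \<chi> (Us (Sv \<chi>))) (hs (k1 (hs (e1 N) q2) (ri N)) q1)"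
    by (rule interchange) (use ob in simp_all)
  hence "k1 (rr (c1 \<chi>)) (hs (k1 \<chi> (k1 (hs (e1 N) q2) (ri N))) (k1 (Us (Sv \<chi>)) q1))
     = k1 (k1 (rr (c1 \<chi>)) (hs \<chi> (Us (Sv \<chi>)))) (hs (k1 (hs (e1 N) q2) (ri N)) q1)"
    by (simp only:) (rule k1_assoc[symmetric], use ob in simp_all)
  also have "\<dots> = k1 (k1 \<chi> (rr (hc N fc))) (hs (k1 (hs (e1 N) q2) (ri N)) q1)"
    using r_nat[OF chi(1)] chi by simp
  also have "\<dots> = k1 \<chi> (k1 (rr (hc N fc)) (hs (k1 (hs (e1 N) q2) (ri N)) q1))"
    by (rule k1_assoc) (use ob in simp_all)
  also have "\<dots> = \<chi>" unfolding L4_Z[OF N] using ob by simp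
  finally show ?thesis .
qed

end

end


context pdc begin

lemma E_simps[simp]:
  "cOb (endo_cat D) = {M \<in> Ob1. Sh M = Th M}"
  "cAr (endo_cat D) = {\<alpha> \<in> Ar1. Sv \<alpha> = Tv \<alpha> \<and> Sh (d1 \<alpha>) = Th (d1 \<alpha>) \<and> Sh (c1 \<alpha>) = Th (c1 \<alpha>)}"
  "cdom (endo_cat D) = d1" "ccod (endo_cat D) = c1" "ccomp (endo_cat D) = k1" "cid (endo_cat D) = e1"
  by (simp_all add: endo_cat_def)

lemma fib_lift:
  assumes hc: "has_companion D f" and hj: "has_conjoint D f" and f: "f \<in> Ar0"
    and M: "M \<in> Ob1" "Sh M = c0 f" "Th M = c0 f"
  shows "\<exists>\<phi>. cartesian (endo_cat D) D0 Sv \<phi> \<and> c1 \<phi> = M \<and> Sv \<phi> = f"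
proof -
  from hc obtain fh p1 p2 where fh: "fh \<in> Ob1" "Sh fh = d0 f" "Th fh = c0 f"
    and p1: "p1 \<in> Ar1" "d1 p1 = fh" "c1 p1 = Uh (c0 f)" "Sv p1 = f" "Tv p1 = e0 (c0 f)"
    and p2: "p2 \<in> Ar1" "d1 p2 = Uh (d0 f)" "c1 p2 = fh" "Sv p2 = e0 (d0 f)" "Tv p2 = f"
    and pp: "k1 p1 p2 = Us f" and pc: "k1 (ll fh) (hs p1 p2) = rr fh"
    unfolding has_companion_def Let_def by blast
  from hj obtain fc q1 q2 where fc: "fc \<in> Ob1" "Sh fc = c0 f" "Th fc = d0 f"
    and q1: "q1 \<in> Ar1" "d1 q1 = fc" "c1 q1 = Uh (c0 f)" "Sv q1 = e0 (c0 f)" "Tv q1 = f"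
    and q2: "q2 \<in> Ar1" "d1 q2 = Uh (d0 f)" "c1 q2 = fc" "Sv q2 = f" "Tv q2 = e0 (d0 f)"
    and qq: "k1 q1 q2 = Us f" and qc: "k1 (rr fc) (hs q2 q1) = ll fc"
    unfolding has_conjoint_def Let_def by blast
  note dat = f fh p1 p2 fc q1 q2 M
  define M' where "M' = hc M fh"
  have M': "M' \<in> Ob1" "Sh M' = d0 f" "Th M' = c0 f" using dat by (simp_all add: M'_def)
  define \<phi>1 where "\<phi>1 = k1 (rr M) (hs (e1 M) p1)"
  define \<phi>2 where "\<phi>2 = k1 (ll M') (hs q1 (e1 M'))"
  have t1: "\<phi>1 \<in> Ar1" "d1 \<phi>1 = M'" "c1 \<phi>1 = M" "Sv \<phi>1 = f" "Tv \<phi>1 = e0 (c0 f)"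
    using dat by (simp_all add: \<phi>1_def M'_def)
  have t2: "\<phi>2 \<in> Ar1" "d1 \<phi>2 = hc fc M'" "c1 \<phi>2 = M'" "Sv \<phi>2 = e0 (d0 f)" "Tv \<phi>2 = f"
    using dat M' by (simp_all add: \<phi>2_def)
  define \<phi> where "\<phi> = k1 \<phi>1 \<phi>2"
  have t: "\<phi> \<in> Ar1" "d1 \<phi> = hc fc M'" "c1 \<phi> = M" "Sv \<phi> = f" "Tv \<phi> = f"
    using t1 t2 dat by (simp_all add: \<phi>_def)
  have Rendo: "Sh (hc fc M') = Th (hc fc M')" using dat M' by simp
  have cart: "cartesian (endo_cat D) D0 Sv \<phi>"
    unfolding cartesian_def
  proof (intro conjI ballI impI allI)
    show "\<phi> \<in> cAr (endo_cat D)" using t Rendo M by simp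
  next
    fix \<psi> g
    assume psi: "\<psi> \<in> cAr (endo_cat D)" "ccod (endo_cat D) \<psi> = ccod (endo_cat D) \<phi>"
      and g: "g \<in> Ar0" "c0 g = d0 (Sv \<phi>) \<and> Sv \<psi> = k0 (Sv \<phi>) g"
    have ps: "\<psi> \<in> Ar1" "c1 \<psi> = M" "Sv \<psi> = k0 f g" "Tv \<psi> = k0 f g" "Sh (d1 \<psi>) = Th (d1 \<psi>)"
      using psi g t by auto
    have g0: "c0 g = d0 f" using g t by simp
    have "d0 g = d0 (k0 f g)" using g0 g dat by simp
    also have "\<dots> = Sh (d1 \<psi>)" using ps(1) by (simp only: ps(3)[symmetric]) simp
    finally have g': "c0 g = d0 f" "d0 g = Sh (d1 \<psi>)" using g0 by simp_all
    define \<psi>1 where "\<psi>1 = k1 (hs \<psi> (k1 p2 (Us g))) (ri (d1 \<psi>))"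
    have s1: "k1 \<phi>1 \<psi>1 = \<psi>"
      unfolding \<phi>1_def \<psi>1_def by (rule L1_surj[of f fh p1 p2 M]) (use dat pp pc ps g g' in simp_all)
    have ty1: "\<psi>1 \<in> Ar1" "d1 \<psi>1 = d1 \<psi>" "c1 \<psi>1 = M'" "Sv \<psi>1 = g" "Tv \<psi>1 = k0 f g"
      using dat ps g g' by (simp_all add: \<psi>1_def M'_def)
    define \<chi> where "\<chi> = k1 (hs (k1 q2 (Us g)) \<psi>1) (li (d1 \<psi>))"
    have s2: "k1 \<phi>2 \<chi> = \<psi>1"
      unfolding \<phi>2_def \<chi>_def ty1(2)[symmetric] by (rule L2_surj[of f fc q1 q2 M']) (use dat qq qc ps g g' ty1 M' in simp_all)
    have ty: "\<chi> \<in> Ar1" "d1 \<chi> = d1 \<psi>" "c1 \<chi> = hc fc M'" "Sv \<chi> = g" "Tv \<chi> = g"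
      using dat ps g g' ty1 M' by (simp_all add: \<chi>_def)
    let ?P = "\<lambda>\<chi>. \<chi> \<in> cAr (endo_cat D) \<and> cdom (endo_cat D) \<chi> = cdom (endo_cat D) \<psi> \<and>
        ccod (endo_cat D) \<chi> = cdom (endo_cat D) \<phi> \<and> Sv \<chi> = g \<and> ccomp (endo_cat D) \<phi> \<chi> = \<psi>"
    show "\<exists>!\<chi>. ?P \<chi>"
    proof (rule ex1I[of _ \<chi>])
      have "k1 \<phi> \<chi> = \<psi>" unfolding \<phi>_def
        using k1_assoc[of \<chi> \<phi>2 \<phi>1] s1 s2 t1 t2 ty ty1 by simp
      note kk = this
      have a: "\<chi> \<in> cAr (endo_cat D)" using ty Rendo ps(5) by simp
      show "?P \<chi>" unfolding E_simps(3-6) using a ty t kk by simp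
    next
      fix \<chi>' assume P: "?P \<chi>'"
      from P have m: "\<chi>' \<in> cAr (endo_cat D)" and c2: "d1 \<chi>' = d1 \<psi>" "c1 \<chi>' = d1 \<phi>" "Sv \<chi>' = g" "k1 \<phi> \<chi>' = \<psi>"
        unfolding E_simps(3-6) by blast+
      from m have m2: "\<chi>' \<in> Ar1" "Sv \<chi>' = Tv \<chi>'" unfolding E_simps(2) by blast+
      have c: "\<chi>' \<in> Ar1" "d1 \<chi>' = d1 \<psi>" "c1 \<chi>' = hc fc M'" "Sv \<chi>' = g" "Tv \<chi>' = g" "k1 \<phi> \<chi>' = \<psi>"
        using m2 c2 t(2) by simp_all
      define \<psi>1' where "\<psi>1' = k1 \<phi>2 \<chi>'"
      have ty1': "\<psi>1' \<in> Ar1" "d1 \<psi>1' = d1 \<psi>" "c1 \<psi>1' = M'" "Sv \<psi>1' = g"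
        using c t2 dat ps g g' by (simp_all add: \<psi>1'_def)
      have e1: "k1 \<phi>1 \<psi>1' = \<psi>" unfolding \<psi>1'_def
        using k1_assoc[of \<chi>' \<phi>2 \<phi>1] c t1 t2 by (simp add: \<phi>_def)
      have "\<psi>1' = k1 (hs (k1 \<phi>1 \<psi>1') (k1 p2 (Us (Sv \<psi>1')))) (ri (d1 \<psi>1'))"
        unfolding \<phi>1_def by (rule L1_inv[of f fh p1 p2 M, symmetric]) (use dat pp pc ty1' M' in \<open>simp_all add: M'_def\<close>)
      hence "\<psi>1' = \<psi>1" unfolding e1 ty1' \<psi>1_def .
      have "\<chi>' = k1 (hs (k1 q2 (Us (Tv \<chi>'))) (k1 \<phi>2 \<chi>')) (li (d1 \<chi>'))"
        unfolding \<phi>2_def by (rule L2_inv[of f fc q1 q2 M', symmetric]) (use dat qq qc c M' in simp_all)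
      also have "\<dots> = \<chi>" unfolding \<chi>_def c \<open>\<psi>1' = \<psi>1\<close>[unfolded \<psi>1'_def] ..
      finally show "\<chi>' = \<chi>" .
    qed
  qed
  show ?thesis using cart t by blast
qed

lemma opfib_lift:
  assumes hc: "has_companion D f" and hj: "has_conjoint D f" and f: "f \<in> Ar0"
    and N: "N \<in> Ob1" "Sh N = d0 f" "Th N = d0 f"
  shows "\<exists>\<epsilon>. opcartesian (endo_cat D) D0 Sv \<epsilon> \<and> d1 \<epsilon> = N \<and> Sv \<epsilon> = f"
proof -
  from hc obtain fh p1 p2 where fh: "fh \<in> Ob1" "Sh fh = d0 f" "Th fh = c0 f"
    and p1: "p1 \<in> Ar1" "d1 p1 = fh" "c1 p1 = Uh (c0 f)" "Sv p1 = f" "Tv p1 = e0 (c0 f)"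
    and p2: "p2 \<in> Ar1" "d1 p2 = Uh (d0 f)" "c1 p2 = fh" "Sv p2 = e0 (d0 f)" "Tv p2 = f"
    and pp: "k1 p1 p2 = Us f" and pc: "k1 (ll fh) (hs p1 p2) = rr fh"
    unfolding has_companion_def Let_def by blast
  from hj obtain fc q1 q2 where fc: "fc \<in> Ob1" "Sh fc = c0 f" "Th fc = d0 f"
    and q1: "q1 \<in> Ar1" "d1 q1 = fc" "c1 q1 = Uh (c0 f)" "Sv q1 = e0 (c0 f)" "Tv q1 = f"
    and q2: "q2 \<in> Ar1" "d1 q2 = Uh (d0 f)" "c1 q2 = fc" "Sv q2 = f" "Tv q2 = e0 (d0 f)"
    and qq: "k1 q1 q2 = Us f" and qc: "k1 (rr fc) (hs q2 q1) = ll fc"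
    unfolding has_conjoint_def Let_def by blast
  note dat = f fh p1 p2 fc q1 q2 N
  define N' where "N' = hc N fc"
  have N': "N' \<in> Ob1" "Sh N' = c0 f" "Th N' = d0 f" using dat by (simp_all add: N'_def)
  define \<epsilon>2 where "\<epsilon>2 = k1 (hs (e1 N) q2) (ri N)"
  define \<epsilon>1 where "\<epsilon>1 = k1 (hs p2 (e1 N')) (li N')"
  have t2: "\<epsilon>2 \<in> Ar1" "d1 \<epsilon>2 = N" "c1 \<epsilon>2 = N'" "Sv \<epsilon>2 = f" "Tv \<epsilon>2 = e0 (d0 f)"
    using dat by (simp_all add: \<epsilon>2_def N'_def)
  have t1: "\<epsilon>1 \<in> Ar1" "d1 \<epsilon>1 = N'" "c1 \<epsilon>1 = hc fh N'" "Sv \<epsilon>1 = e0 (c0 f)" "Tv \<epsilon>1 = f"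
    using dat N' by (simp_all add: \<epsilon>1_def)
  define \<epsilon> where "\<epsilon> = k1 \<epsilon>1 \<epsilon>2"
  have t: "\<epsilon> \<in> Ar1" "d1 \<epsilon> = N" "c1 \<epsilon> = hc fh N'" "Sv \<epsilon> = f" "Tv \<epsilon> = f"
    using t1 t2 dat by (simp_all add: \<epsilon>_def)
  have Rendo: "Sh (hc fh N') = Th (hc fh N')" using dat N' by simp
  have cart: "opcartesian (endo_cat D) D0 Sv \<epsilon>"
    unfolding opcartesian_def
  proof (intro conjI ballI impI allI)
    show "\<epsilon> \<in> cAr (endo_cat D)" using t Rendo N by simp
  next
    fix \<psi> h
    assume psi: "\<psi> \<in> cAr (endo_cat D)" "cdom (endo_cat D) \<psi> = cdom (endo_cat D) \<epsilon>"
      and h: "h \<in> Ar0" "d0 h = c0 (Sv \<epsilon>) \<and> Sv \<psi> = k0 h (Sv \<epsilon>)"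
    from psi(1) have m: "\<psi> \<in> Ar1" "Sv \<psi> = Tv \<psi>" "Sh (c1 \<psi>) = Th (c1 \<psi>)" unfolding E_simps(2) by blast+
    have ps: "\<psi> \<in> Ar1" "d1 \<psi> = N" "Sv \<psi> = k0 h f" "Tv \<psi> = k0 h f" "Sh (c1 \<psi>) = Th (c1 \<psi>)"
      using m psi(2) h t by simp_all
    have h0: "d0 h = c0 f" using h t by simp
    have "c0 h = c0 (k0 h f)" using h0 h dat by simp
    also have "\<dots> = Sh (c1 \<psi>)" using ps(1) by (simp only: ps(3)[symmetric]) simp
    finally have h': "d0 h = c0 f" "c0 h = Sh (c1 \<psi>)" using h0 by simp_all
    define \<psi>1 where "\<psi>1 = k1 (rr (c1 \<psi>)) (hs \<psi> (k1 (Us h) q1))"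
    have s1: "k1 \<psi>1 \<epsilon>2 = \<psi>"
      unfolding \<epsilon>2_def \<psi>1_def by (rule L4_surj[of f fc q1 q2 N]) (use dat qq qc ps h h' in simp_all)
    have ty1: "\<psi>1 \<in> Ar1" "d1 \<psi>1 = N'" "c1 \<psi>1 = c1 \<psi>" "Sv \<psi>1 = h" "Tv \<psi>1 = k0 h f"
      using dat ps h h' by (simp_all add: \<psi>1_def N'_def)
    define \<chi> where "\<chi> = k1 (ll (c1 \<psi>)) (hs (k1 (Us h) p1) \<psi>1)"
    have s2: "k1 \<chi> \<epsilon>1 = \<psi>1"
      unfolding \<epsilon>1_def \<chi>_def ty1(3)[symmetric] by (rule L3_surj[of f fh p1 p2 N']) (use dat pp pc ps h h' ty1 N' in simp_all)
    have ty: "\<chi> \<in> Ar1" "d1 \<chi> = hc fh N'" "c1 \<chi> = c1 \<psi>" "Sv \<chi> = h" "Tv \<chi> = h"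
      using dat ps h h' ty1 N' by (simp_all add: \<chi>_def)
    let ?P = "\<lambda>\<chi>. \<chi> \<in> cAr (endo_cat D) \<and> cdom (endo_cat D) \<chi> = ccod (endo_cat D) \<epsilon> \<and>
        ccod (endo_cat D) \<chi> = ccod (endo_cat D) \<psi> \<and> Sv \<chi> = h \<and> ccomp (endo_cat D) \<chi> \<epsilon> = \<psi>"
    show "\<exists>!\<chi>. ?P \<chi>"
    proof (rule ex1I[of _ \<chi>])
      have kk: "k1 \<chi> \<epsilon> = \<psi>" unfolding \<epsilon>_def
        using k1_assoc[of \<epsilon>2 \<epsilon>1 \<chi>] s1 s2 t1 t2 ty ty1 by simp
      have a: "\<chi> \<in> cAr (endo_cat D)" using ty Rendo ps(5) by simp
      show "?P \<chi>" unfolding E_simps(3-6) using a ty t kk by simp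
    next
      fix \<chi>' assume P: "?P \<chi>'"
      from P have m: "\<chi>' \<in> cAr (endo_cat D)" and c2: "d1 \<chi>' = c1 \<epsilon>" "c1 \<chi>' = c1 \<psi>" "Sv \<chi>' = h" "k1 \<chi>' \<epsilon> = \<psi>"
        unfolding E_simps(3-6) by blast+
      from m have m2: "\<chi>' \<in> Ar1" "Sv \<chi>' = Tv \<chi>'" unfolding E_simps(2) by blast+
      have c: "\<chi>' \<in> Ar1" "d1 \<chi>' = hc fh N'" "c1 \<chi>' = c1 \<psi>" "Sv \<chi>' = h" "Tv \<chi>' = h" "k1 \<chi>' \<epsilon> = \<psi>"
        using m2 c2 t(3) by simp_all
      define \<psi>1' where "\<psi>1' = k1 \<chi>' \<epsilon>1"
      have ty1': "\<psi>1' \<in> Ar1" "d1 \<psi>1' = N'" "c1 \<psi>1' = c1 \<psi>" "Sv \<psi>1' = h"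
        using c t1 dat ps h h' by (simp_all add: \<psi>1'_def)
      have e1: "k1 \<psi>1' \<epsilon>2 = \<psi>" unfolding \<psi>1'_def
        using k1_assoc[of \<epsilon>2 \<epsilon>1 \<chi>'] c t1 t2 by (simp add: \<epsilon>_def)
      have "\<psi>1' = k1 (rr (c1 \<psi>1')) (hs (k1 \<psi>1' \<epsilon>2) (k1 (Us (Sv \<psi>1')) q1))"
        unfolding \<epsilon>2_def by (rule L4_inv[of f fc q1 q2 N, symmetric]) (use dat qq qc ty1' N' in \<open>simp_all add: N'_def\<close>)
      hence "\<psi>1' = \<psi>1" unfolding e1 ty1' \<psi>1_def .
      have "\<chi>' = k1 (ll (c1 \<chi>')) (hs (k1 (Us (Tv \<chi>')) p1) (k1 \<chi>' \<epsilon>1))"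
        unfolding \<epsilon>1_def by (rule L3_inv[of f fh p1 p2 N', symmetric]) (use dat pp pc c N' in simp_all)
      also have "\<dots> = \<chi>" unfolding \<chi>_def c \<open>\<psi>1' = \<psi>1\<close>[unfolded \<psi>1'_def] ..
      finally show "\<chi>' = \<chi>" .
    qed
  qed
  show ?thesis using cart t by blast
qed

end

theorem proposition3p15:
  fixes D :: "('o, 'v, 'h, 's) dbl_data"
  assumes "fibrant D"
  shows "bifibration (endo_cat D) (dc_D0 D) (dc_hsrc D) (dc_vsrc D)"
proof -
  from assms have pd: "pseudo_double_category D"
    and cp: "\<forall>f\<in>cAr (dc_D0 D). has_companion D f \<and> has_conjoint D f"
    unfolding fibrant_def by blast+
  interpret pdc D by (unfold_locales) (rule pd)
  have fn: "functor (endo_cat D) D0 Sh Sv"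
    unfolding functor_def by simp
  have fib: "\<forall>b\<in>cOb (endo_cat D). \<forall>f\<in>Ar0. c0 f = Sh b \<longrightarrow>
        (\<exists>\<phi>. cartesian (endo_cat D) D0 Sv \<phi> \<and> ccod (endo_cat D) \<phi> = b \<and> Sv \<phi> = f)"
  proof (intro ballI impI)
    fix b f assume b: "b \<in> cOb (endo_cat D)" and f: "f \<in> Ar0" and e: "c0 f = Sh b"
    from b have b': "b \<in> Ob1" "Sh b = Th b" by simp_all
    show "\<exists>\<phi>. cartesian (endo_cat D) D0 Sv \<phi> \<and> ccod (endo_cat D) \<phi> = b \<and> Sv \<phi> = f"
    proof -
      have hcf: "has_companion D f" and hjf: "has_conjoint D f" using cp f by blast+
      show ?thesis using fib_lift[OF hcf hjf f b'(1) e[symmetric]] e b'(2) unfolding E_simps(4) by simp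
    qed
  qed
  have opfib: "\<forall>a\<in>cOb (endo_cat D). \<forall>f\<in>Ar0. d0 f = Sh a \<longrightarrow>
        (\<exists>\<phi>. opcartesian (endo_cat D) D0 Sv \<phi> \<and> cdom (endo_cat D) \<phi> = a \<and> Sv \<phi> = f)"
  proof (intro ballI impI)
    fix a f assume a: "a \<in> cOb (endo_cat D)" and f: "f \<in> Ar0" and e: "d0 f = Sh a"
    from a have a': "a \<in> Ob1" "Sh a = Th a" by simp_all
    show "\<exists>\<phi>. opcartesian (endo_cat D) D0 Sv \<phi> \<and> cdom (endo_cat D) \<phi> = a \<and> Sv \<phi> = f"
    proof -
      have hcf: "has_companion D f" and hjf: "has_conjoint D f" using cp f by blast+
      show ?thesis using opfib_lift[OF hcf hjf f a'(1) e[symmetric]] e a'(2) unfolding E_simps(3) by simp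
    qed
  qed
  show ?thesis
    unfolding bifibration_def fibration_def opfibration_def using fn fib opfib by blast
qed

end
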